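(* Let $(\mathcal{A}',\mathcal{A},\mathcal{A}'')$ and $(\mathcal{B}',\mathcal{B},\mathcal{B}'')$ be two recollements of abelian categories. Suppose there are functors $F:\mathcal{A}\to\mathcal{B}$, $F':\mathcal{A}'\to\mathcal{B}'$ and $F'':\mathcal{A}''\to\mathcal{B}''$ such that: (1) $F$ and $F'$ are equivalences of categories; (2) the functors $j^*F$ and $F''j^*$ are naturally isomorphic; (3) the functors $i_*F'$ and $Fi_*$ are naturally isomorphic. Then $F''$ is full and essentially surjective.
   Context: A recollement $(\mathcal{A}',\mathcal{A},\mathcal{A}'')$ of abelian categories consists of functors $i_*:\mathcal{A}'\to\mathcal{A}$, $i^*,i^!:\mathcal{A}\to\mathcal{A}'$, $j^*:\mathcal{A}\to\mathcal{A}''$, $j_!,j_*:\mathcal{A}''\to\mathcal{A}$ such that: there are adjunctions $(j_!,j^* )$, $(j^*,j_* )$, $(i^*,i_* )$, $(i_*,i^!)$; the units $\mathrm{id}\to i^!i_*$ and $\mathrm{id}\to j^*j_!$ are isomorphisms; the counits $i^*i_*\to\mathrm{id}$ and $j^*j_*\to\mathrm{id}$ are isomorphisms; and $i_*$ is an embedding onto the full subcategory of objects $A$ with $j^*A=0$. The same notation $i_*,i^*,i^!,j^*,j_!,j_*$ is used for the functors of both recollements. *)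

theory Defs
  imports Main
begin

section \<open>Categories (objects and morphisms carried by HOL types, relativised to sets)\<close>

record ('o, 'm) cat =
  Ob  :: "'o set"
  Hom :: "'o \<Rightarrow> 'o \<Rightarrow> 'm set"
  cmp :: "'m \<Rightarrow> 'm \<Rightarrow> 'm"   (* cmp C g f = g o f *)
  ide :: "'o \<Rightarrow> 'm"

definition category :: "('o, 'm) cat \<Rightarrow> bool" where
  "category C \<longleftrightarrow>
     (\<forall>a\<in>Ob C. ide C a \<in> Hom C a a) \<and>
     (\<forall>a\<in>Ob C. \<forall>b\<in>Ob C. \<forall>c\<in>Ob C. \<forall>f\<in>Hom C a b. \<forall>g\<in>Hom C b c.
          cmp C g f \<in> Hom C a c) \<and>
     (\<forall>a\<in>Ob C. \<forall>b\<in>Ob C. \<forall>f\<in>Hom C a b.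
          cmp C (ide C b) f = f \<and> cmp C f (ide C a) = f) \<and>
     (\<forall>a\<in>Ob C. \<forall>b\<in>Ob C. \<forall>c\<in>Ob C. \<forall>d\<in>Ob C.
        \<forall>f\<in>Hom C a b. \<forall>g\<in>Hom C b c. \<forall>h\<in>Hom C c d.
          cmp C h (cmp C g f) = cmp C (cmp C h g) f)"

definition iso_mor :: "('o, 'm) cat \<Rightarrow> 'o \<Rightarrow> 'o \<Rightarrow> 'm \<Rightarrow> bool" where
  "iso_mor C a b f \<longleftrightarrow> f \<in> Hom C a b \<and>
     (\<exists>g\<in>Hom C b a. cmp C g f = ide C a \<and> cmp C f g = ide C b)"

definition iso_obj :: "('o, 'm) cat \<Rightarrow> 'o \<Rightarrow> 'o \<Rightarrow> bool" where
  "iso_obj C a b \<longleftrightarrow> (\<exists>f. iso_mor C a b f)"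

definition zero_object :: "('o, 'm) cat \<Rightarrow> 'o \<Rightarrow> bool" where
  "zero_object C z \<longleftrightarrow> z \<in> Ob C \<and>
     (\<forall>b\<in>Ob C. (\<exists>!f. f \<in> Hom C z b) \<and> (\<exists>!f. f \<in> Hom C b z))"

definition zero_mor :: "('o, 'm) cat \<Rightarrow> 'o \<Rightarrow> 'o \<Rightarrow> 'm \<Rightarrow> bool" where
  "zero_mor C a b f \<longleftrightarrow> f \<in> Hom C a b \<and>
     (\<exists>z. zero_object C z \<and> (\<exists>g\<in>Hom C a z. \<exists>h\<in>Hom C z b. f = cmp C h g))"

definition mono :: "('o, 'm) cat \<Rightarrow> 'o \<Rightarrow> 'o \<Rightarrow> 'm \<Rightarrow> bool" where
  "mono C a b f \<longleftrightarrow> f \<in> Hom C a b \<and>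
     (\<forall>c\<in>Ob C. \<forall>g\<in>Hom C c a. \<forall>h\<in>Hom C c a. cmp C f g = cmp C f h \<longrightarrow> g = h)"

definition epi :: "('o, 'm) cat \<Rightarrow> 'o \<Rightarrow> 'o \<Rightarrow> 'm \<Rightarrow> bool" where
  "epi C a b f \<longleftrightarrow> f \<in> Hom C a b \<and>
     (\<forall>c\<in>Ob C. \<forall>g\<in>Hom C b c. \<forall>h\<in>Hom C b c. cmp C g f = cmp C h f \<longrightarrow> g = h)"

definition is_kernel :: "('o, 'm) cat \<Rightarrow> 'o \<Rightarrow> 'o \<Rightarrow> 'm \<Rightarrow> 'o \<Rightarrow> 'm \<Rightarrow> bool" where
  "is_kernel C a b f K k \<longleftrightarrow> f \<in> Hom C a b \<and> K \<in> Ob C \<and> k \<in> Hom C K a \<and>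
     zero_mor C K b (cmp C f k) \<and>
     (\<forall>c\<in>Ob C. \<forall>g\<in>Hom C c a. zero_mor C c b (cmp C f g) \<longrightarrow>
        (\<exists>!u. u \<in> Hom C c K \<and> cmp C k u = g))"

definition is_cokernel :: "('o, 'm) cat \<Rightarrow> 'o \<Rightarrow> 'o \<Rightarrow> 'm \<Rightarrow> 'o \<Rightarrow> 'm \<Rightarrow> bool" where
  "is_cokernel C a b f Q q \<longleftrightarrow> f \<in> Hom C a b \<and> Q \<in> Ob C \<and> q \<in> Hom C b Q \<and>
     zero_mor C a Q (cmp C q f) \<and>
     (\<forall>c\<in>Ob C. \<forall>g\<in>Hom C b c. zero_mor C a c (cmp C g f) \<longrightarrow>
        (\<exists>!u. u \<in> Hom C Q c \<and> cmp C u q = g))"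

definition has_product :: "('o, 'm) cat \<Rightarrow> 'o \<Rightarrow> 'o \<Rightarrow> bool" where
  "has_product C a b \<longleftrightarrow> (\<exists>p\<in>Ob C. \<exists>p1\<in>Hom C p a. \<exists>p2\<in>Hom C p b.
     \<forall>c\<in>Ob C. \<forall>f\<in>Hom C c a. \<forall>g\<in>Hom C c b.
       (\<exists>!u. u \<in> Hom C c p \<and> cmp C p1 u = f \<and> cmp C p2 u = g))"

definition has_coproduct :: "('o, 'm) cat \<Rightarrow> 'o \<Rightarrow> 'o \<Rightarrow> bool" where
  "has_coproduct C a b \<longleftrightarrow> (\<exists>s\<in>Ob C. \<exists>s1\<in>Hom C a s. \<exists>s2\<in>Hom C b s.
     \<forall>c\<in>Ob C. \<forall>f\<in>Hom C a c. \<forall>g\<in>Hom C b c.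
       (\<exists>!u. u \<in> Hom C s c \<and> cmp C u s1 = f \<and> cmp C u s2 = g))"

definition abelian :: "('o, 'm) cat \<Rightarrow> bool" where
  "abelian C \<longleftrightarrow> category C \<and>
     (\<exists>z. zero_object C z) \<and>
     (\<forall>a\<in>Ob C. \<forall>b\<in>Ob C. has_product C a b \<and> has_coproduct C a b) \<and>
     (\<forall>a\<in>Ob C. \<forall>b\<in>Ob C. \<forall>f\<in>Hom C a b.
        (\<exists>K k. is_kernel C a b f K k) \<and> (\<exists>Q q. is_cokernel C a b f Q q)) \<and>
     (\<forall>a\<in>Ob C. \<forall>b\<in>Ob C. \<forall>f. mono C a b f \<longrightarrow>
        (\<exists>c\<in>Ob C. \<exists>g\<in>Hom C b c. is_kernel C b c g a f)) \<and>
     (\<forall>a\<in>Ob C. \<forall>b\<in>Ob C. \<forall>f. epi C a b f \<longrightarrow>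
        (\<exists>c\<in>Ob C. \<exists>g\<in>Hom C c a. is_cokernel C c a g b f))"

record ('o1, 'm1, 'o2, 'm2) ftr =
  fo :: "'o1 \<Rightarrow> 'o2"
  fm :: "'m1 \<Rightarrow> 'm2"

definition is_functor :: "('o1, 'm1) cat \<Rightarrow> ('o2, 'm2) cat \<Rightarrow> ('o1, 'm1, 'o2, 'm2) ftr \<Rightarrow> bool" where
  "is_functor C D F \<longleftrightarrow>
     (\<forall>a\<in>Ob C. fo F a \<in> Ob D) \<and>
     (\<forall>a\<in>Ob C. \<forall>b\<in>Ob C. \<forall>f\<in>Hom C a b. fm F f \<in> Hom D (fo F a) (fo F b)) \<and>
     (\<forall>a\<in>Ob C. fm F (ide C a) = ide D (fo F a)) \<and>
     (\<forall>a\<in>Ob C. \<forall>b\<in>Ob C. \<forall>c\<in>Ob C. \<forall>f\<in>Hom C a b. \<forall>g\<in>Hom C b c.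
        fm F (cmp C g f) = cmp D (fm F g) (fm F f))"

definition fcomp :: "('o2, 'm2, 'o3, 'm3) ftr \<Rightarrow> ('o1, 'm1, 'o2, 'm2) ftr \<Rightarrow> ('o1, 'm1, 'o3, 'm3) ftr" where
  "fcomp G F = \<lparr>fo = fo G \<circ> fo F, fm = fm G \<circ> fm F\<rparr>"

definition fid :: "('o, 'm, 'o, 'm) ftr" where
  "fid = \<lparr>fo = id, fm = id\<rparr>"

definition nat_trans :: "('o1, 'm1) cat \<Rightarrow> ('o2, 'm2) cat \<Rightarrow> ('o1, 'm1, 'o2, 'm2) ftr \<Rightarrow>
    ('o1, 'm1, 'o2, 'm2) ftr \<Rightarrow> ('o1 \<Rightarrow> 'm2) \<Rightarrow> bool" where
  "nat_trans C D F G eta \<longleftrightarrow> is_functor C D F \<and> is_functor C D G \<and>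
     (\<forall>a\<in>Ob C. eta a \<in> Hom D (fo F a) (fo G a)) \<and>
     (\<forall>a\<in>Ob C. \<forall>b\<in>Ob C. \<forall>f\<in>Hom C a b.
        cmp D (eta b) (fm F f) = cmp D (fm G f) (eta a))"

definition nat_iso :: "('o1, 'm1) cat \<Rightarrow> ('o2, 'm2) cat \<Rightarrow> ('o1, 'm1, 'o2, 'm2) ftr \<Rightarrow>
    ('o1, 'm1, 'o2, 'm2) ftr \<Rightarrow> ('o1 \<Rightarrow> 'm2) \<Rightarrow> bool" where
  "nat_iso C D F G eta \<longleftrightarrow> nat_trans C D F G eta \<and>
     (\<forall>a\<in>Ob C. iso_mor D (fo F a) (fo G a) (eta a))"

definition nat_isomorphic :: "('o1, 'm1) cat \<Rightarrow> ('o2, 'm2) cat \<Rightarrow> ('o1, 'm1, 'o2, 'm2) ftr \<Rightarrow>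
    ('o1, 'm1, 'o2, 'm2) ftr \<Rightarrow> bool" where
  "nat_isomorphic C D F G \<longleftrightarrow> (\<exists>eta. nat_iso C D F G eta)"

definition adjunction :: "('o1, 'm1) cat \<Rightarrow> ('o2, 'm2) cat \<Rightarrow> ('o1, 'm1, 'o2, 'm2) ftr \<Rightarrow>
    ('o2, 'm2, 'o1, 'm1) ftr \<Rightarrow> ('o1 \<Rightarrow> 'm1) \<Rightarrow> ('o2 \<Rightarrow> 'm2) \<Rightarrow> bool" where
  "adjunction C D L R eta eps \<longleftrightarrow>
     is_functor C D L \<and> is_functor D C R \<and>
     nat_trans C C fid (fcomp R L) eta \<and>
     nat_trans D D (fcomp L R) fid eps \<and>
     (\<forall>a\<in>Ob C. cmp D (eps (fo L a)) (fm L (eta a)) = ide D (fo L a)) \<and>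
     (\<forall>b\<in>Ob D. cmp C (fm R (eps b)) (eta (fo R b)) = ide C (fo R b))"

definition full :: "('o1, 'm1) cat \<Rightarrow> ('o2, 'm2) cat \<Rightarrow> ('o1, 'm1, 'o2, 'm2) ftr \<Rightarrow> bool" where
  "full C D F \<longleftrightarrow> (\<forall>a\<in>Ob C. \<forall>b\<in>Ob C. \<forall>g\<in>Hom D (fo F a) (fo F b).
      \<exists>f\<in>Hom C a b. fm F f = g)"

definition faithful :: "('o1, 'm1) cat \<Rightarrow> ('o2, 'm2) cat \<Rightarrow> ('o1, 'm1, 'o2, 'm2) ftr \<Rightarrow> bool" where
  "faithful C D F \<longleftrightarrow> (\<forall>a\<in>Ob C. \<forall>b\<in>Ob C. \<forall>f\<in>Hom C a b. \<forall>g\<in>Hom C a b.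
      fm F f = fm F g \<longrightarrow> f = g)"

definition ess_surj :: "('o1, 'm1) cat \<Rightarrow> ('o2, 'm2) cat \<Rightarrow> ('o1, 'm1, 'o2, 'm2) ftr \<Rightarrow> bool" where
  "ess_surj C D F \<longleftrightarrow> (\<forall>d\<in>Ob D. \<exists>c\<in>Ob C. iso_obj D (fo F c) d)"

definition equivalence :: "('o1, 'm1) cat \<Rightarrow> ('o2, 'm2) cat \<Rightarrow> ('o1, 'm1, 'o2, 'm2) ftr \<Rightarrow> bool" where
  "equivalence C D F \<longleftrightarrow> is_functor C D F \<and>
     (\<exists>G. is_functor D C G \<and> nat_isomorphic C C (fcomp G F) fid \<and>
          nat_isomorphic D D (fcomp F G) fid)"

text \<open>recollement A' A A'' i_* i^* i^! j^* j_! j_*\<close>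
definition recollement ::
  "('a1, 'b1) cat \<Rightarrow> ('a, 'b) cat \<Rightarrow> ('a2, 'b2) cat \<Rightarrow>
   ('a1, 'b1, 'a, 'b) ftr \<Rightarrow> ('a, 'b, 'a1, 'b1) ftr \<Rightarrow> ('a, 'b, 'a1, 'b1) ftr \<Rightarrow>
   ('a, 'b, 'a2, 'b2) ftr \<Rightarrow> ('a2, 'b2, 'a, 'b) ftr \<Rightarrow> ('a2, 'b2, 'a, 'b) ftr \<Rightarrow> bool" where
  "recollement A1 A A2 ilow iup ish jup jsh jlow \<longleftrightarrow>
     abelian A1 \<and> abelian A \<and> abelian A2 \<and>
     is_functor A1 A ilow \<and> is_functor A A1 iup \<and> is_functor A A1 ish \<and>
     is_functor A A2 jup \<and> is_functor A2 A jsh \<and> is_functor A2 A jlow \<and>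
     \<comment> \<open>(j_!, j^*) with invertible unit\<close>
     (\<exists>eta eps. adjunction A2 A jsh jup eta eps \<and>
        (\<forall>a\<in>Ob A2. iso_mor A2 a (fo jup (fo jsh a)) (eta a))) \<and>
     \<comment> \<open>(j^*, j_*) with invertible counit\<close>
     (\<exists>eta eps. adjunction A A2 jup jlow eta eps \<and>
        (\<forall>a\<in>Ob A2. iso_mor A2 (fo jup (fo jlow a)) a (eps a))) \<and>
     \<comment> \<open>(i^*, i_*) with invertible counit\<close>
     (\<exists>eta eps. adjunction A A1 iup ilow eta eps \<and>
        (\<forall>a\<in>Ob A1. iso_mor A1 (fo iup (fo ilow a)) a (eps a))) \<and>
     \<comment> \<open>(i_*, i^!) with invertible unit\<close>
     (\<exists>eta eps. adjunction A1 A ilow ish eta eps \<and>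
        (\<forall>a\<in>Ob A1. iso_mor A1 a (fo ish (fo ilow a)) (eta a))) \<and>
     \<comment> \<open>i_* is an embedding onto the full subcategory of objects X with j^* X = 0\<close>
     full A1 A ilow \<and> faithful A1 A ilow \<and>
     (\<forall>x\<in>Ob A. zero_object A2 (fo jup x) \<longleftrightarrow> (\<exists>y\<in>Ob A1. iso_obj A (fo ilow y) x))"

end

theory Submission
  imports Defs
begin


lemma fcomp_simps[simp]: "fo (fcomp G F) = fo G o fo F" "fm (fcomp G F) = fm G o fm F"
  by (simp_all add: fcomp_def)
lemma fid_simps[simp]: "fo fid = id" "fm fid = id" by (simp_all add: fid_def)

definition inv_mor :: "('o, 'm) cat \<Rightarrow> 'o \<Rightarrow> 'o \<Rightarrow> 'm \<Rightarrow> 'm" where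
 "inv_mor C a b f = (SOME g. g \<in> Hom C b a \<and> cmp C g f = ide C a \<and> cmp C f g = ide C b)"

lemma iso_inv:
  assumes "iso_mor C a b f"
  shows "inv_mor C a b f \<in> Hom C b a" "cmp C (inv_mor C a b f) f = ide C a" "cmp C f (inv_mor C a b f) = ide C b"
proof -
  have "\<exists>g. g \<in> Hom C b a \<and> cmp C g f = ide C a \<and> cmp C f g = ide C b" using assms unfolding iso_mor_def by blast
  from someI_ex[OF this] show "inv_mor C a b f \<in> Hom C b a" "cmp C (inv_mor C a b f) f = ide C a" "cmp C f (inv_mor C a b f) = ide C b"
    unfolding inv_mor_def by blast+
qed

lemma iso_hom: "iso_mor C a b f \<Longrightarrow> f \<in> Hom C a b" unfolding iso_mor_def by blast

lemma iso_inv_iso: "iso_mor C a b f \<Longrightarrow> iso_mor C b a (inv_mor C a b f)"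
  unfolding iso_mor_def[of C b a] using iso_inv[of C a b f] iso_hom[of C a b f] by blast

lemma ex1_eq: "\<exists>!x. P x \<Longrightarrow> P a \<Longrightarrow> P b \<Longrightarrow> a = b" by blast

locale cat = fixes C :: "('o, 'm) cat" assumes category: "category C"
begin

lemma cat_axs:
  "\<forall>a\<in>Ob C. ide C a \<in> Hom C a a"
  "\<forall>a\<in>Ob C. \<forall>b\<in>Ob C. \<forall>c\<in>Ob C. \<forall>f\<in>Hom C a b. \<forall>g\<in>Hom C b c. cmp C g f \<in> Hom C a c"
  "\<forall>a\<in>Ob C. \<forall>b\<in>Ob C. \<forall>f\<in>Hom C a b. cmp C (ide C b) f = f \<and> cmp C f (ide C a) = f"
  "\<forall>a\<in>Ob C. \<forall>b\<in>Ob C. \<forall>c\<in>Ob C. \<forall>d\<in>Ob C. \<forall>f\<in>Hom C a b. \<forall>g\<in>Hom C b c. \<forall>h\<in>Hom C c d.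
          cmp C h (cmp C g f) = cmp C (cmp C h g) f"
  using conjunct1[OF category[unfolded category_def]] conjunct1[OF conjunct2[OF category[unfolded category_def]]]
    conjunct1[OF conjunct2[OF conjunct2[OF category[unfolded category_def]]]]
    conjunct2[OF conjunct2[OF conjunct2[OF category[unfolded category_def]]]]
  by - (assumption)+

lemma ide_hom[intro,simp]: "a \<in> Ob C \<Longrightarrow> ide C a \<in> Hom C a a"
  using cat_axs(1) by blast
lemma comp_hom[intro]: "f \<in> Hom C a b \<Longrightarrow> g \<in> Hom C b c \<Longrightarrow> a \<in> Ob C \<Longrightarrow> b \<in> Ob C \<Longrightarrow> c \<in> Ob C \<Longrightarrow> cmp C g f \<in> Hom C a c"
  using cat_axs(2) by simp
lemma idl[simp]: "f \<in> Hom C a b \<Longrightarrow> a \<in> Ob C \<Longrightarrow> b \<in> Ob C \<Longrightarrow> cmp C (ide C b) f = f"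
  using cat_axs(3) by simp
lemma idr[simp]: "f \<in> Hom C a b \<Longrightarrow> a \<in> Ob C \<Longrightarrow> b \<in> Ob C \<Longrightarrow> cmp C f (ide C a) = f"
  using cat_axs(3) by simp
lemma assoc: "f \<in> Hom C a b \<Longrightarrow> g \<in> Hom C b c \<Longrightarrow> h \<in> Hom C c d \<Longrightarrow> a \<in> Ob C \<Longrightarrow> b \<in> Ob C \<Longrightarrow> c \<in> Ob C \<Longrightarrow> d \<in> Ob C \<Longrightarrow>
   cmp C h (cmp C g f) = cmp C (cmp C h g) f"
  using cat_axs(4) by simp

lemma inv_unique:
  assumes f: "iso_mor C a b f" and g: "g \<in> Hom C b a" and gf: "cmp C g f = ide C a" and ob: "a \<in> Ob C" "b \<in> Ob C"
  shows "g = inv_mor C a b f"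
proof -
  note i = iso_inv[OF f] iso_hom[OF f]
  have "g = cmp C g (ide C b)" using g ob by simp
  also have "\<dots> = cmp C g (cmp C f (inv_mor C a b f))" using i by simp
  also have "\<dots> = cmp C (cmp C g f) (inv_mor C a b f)" using assoc[OF i(1) i(4) g ob(2,1,2,1)] .
  also have "\<dots> = inv_mor C a b f" using gf i ob by simp
  finally show ?thesis .
qed
lemma inv_unique2:
  assumes f: "iso_mor C a b f" and g: "g \<in> Hom C b a" and fg: "cmp C f g = ide C b" and ob: "a \<in> Ob C" "b \<in> Ob C"
  shows "g = inv_mor C a b f"
proof -
  note i = iso_inv[OF f] iso_hom[OF f]
  have "g = cmp C (ide C a) g" using g ob by simp
  also have "\<dots> = cmp C (cmp C (inv_mor C a b f) f) g" using i by simp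
  also have "\<dots> = cmp C (inv_mor C a b f) (cmp C f g)" using assoc[OF g i(4) i(1) ob(2,1,2,1)] by simp
  also have "\<dots> = inv_mor C a b f" using fg i ob by simp
  finally show ?thesis .
qed

lemma iso_cancel_left:
  assumes f: "iso_mor C a b f" and u: "u \<in> Hom C x a" and v: "v \<in> Hom C x a" and eq: "cmp C f u = cmp C f v"
   and ob: "x \<in> Ob C" "a \<in> Ob C" "b \<in> Ob C"
  shows "u = v"
proof -
  note i = iso_inv[OF f] iso_hom[OF f]
  have "u = cmp C (cmp C (inv_mor C a b f) f) u" using i u ob by simp
  also have "\<dots> = cmp C (inv_mor C a b f) (cmp C f u)" using assoc[OF u i(4) i(1) ob(1,2,3,2)] by simp
  also have "\<dots> = cmp C (cmp C (inv_mor C a b f) f) v" using eq assoc[OF v i(4) i(1) ob(1,2,3,2)] by simp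
  also have "\<dots> = v" using i v ob by simp
  finally show ?thesis .
qed
lemma iso_cancel_right:
  assumes f: "iso_mor C a b f" and u: "u \<in> Hom C b x" and v: "v \<in> Hom C b x" and eq: "cmp C u f = cmp C v f"
   and ob: "x \<in> Ob C" "a \<in> Ob C" "b \<in> Ob C"
  shows "u = v"
proof -
  note i = iso_inv[OF f] iso_hom[OF f]
  have "u = cmp C u (cmp C f (inv_mor C a b f))" using i u ob by simp
  also have "\<dots> = cmp C (cmp C u f) (inv_mor C a b f)" using assoc[OF i(1) i(4) u ob(3,2,3,1)] by simp
  also have "\<dots> = cmp C v (cmp C f (inv_mor C a b f))" using eq assoc[OF i(1) i(4) v ob(3,2,3,1)] by simp
  also have "\<dots> = v" using i v ob by simp
  finally show ?thesis .
qed

lemma iso_ide: "a \<in> Ob C \<Longrightarrow> iso_mor C a a (ide C a)"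
proof -
  assume a: "a \<in> Ob C"
  have "cmp C (ide C a) (ide C a) = ide C a" using idl[OF ide_hom[OF a] a a] .
  thus ?thesis unfolding iso_mor_def using ide_hom[OF a] by blast
qed

lemma iso_comp: "iso_mor C a b f \<Longrightarrow> iso_mor C b c g \<Longrightarrow> a \<in> Ob C \<Longrightarrow> b \<in> Ob C \<Longrightarrow> c \<in> Ob C \<Longrightarrow> iso_mor C a c (cmp C g f)"
proof -
  assume f: "iso_mor C a b f" and g: "iso_mor C b c g" and ob: "a \<in> Ob C" "b \<in> Ob C" "c \<in> Ob C"
  define f' where "f' = inv_mor C a b f"
  define g' where "g' = inv_mor C b c g"
  have h: "f \<in> Hom C a b" "g \<in> Hom C b c" "f' \<in> Hom C b a" "g' \<in> Hom C c b"
    "cmp C f' f = ide C a" "cmp C f f' = ide C b" "cmp C g' g = ide C b" "cmp C g g' = ide C c"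
    using iso_inv[OF f] iso_inv[OF g] iso_hom[OF f] iso_hom[OF g] f'_def g'_def by auto
  have gf: "cmp C g f \<in> Hom C a c" using h ob by blast
  have fg': "cmp C f' g' \<in> Hom C c a" using h ob by blast
  have "cmp C (cmp C f' g') (cmp C g f) = cmp C f' (cmp C g' (cmp C g f))"
    using assoc[OF gf h(4) h(3) ob(1,3,2,1)] by simp
  also have "\<dots> = cmp C f' (cmp C (cmp C g' g) f)" using assoc[OF h(1) h(2) h(4) ob(1,2,3,2)] by simp
  also have "\<dots> = ide C a" using h ob by simp
  finally have 1: "cmp C (cmp C f' g') (cmp C g f) = ide C a" .
  have "cmp C (cmp C g f) (cmp C f' g') = cmp C g (cmp C f (cmp C f' g'))"
    using assoc[OF fg' h(1) h(2) ob(3,1,2,3)] by simp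
  also have "\<dots> = cmp C g (cmp C (cmp C f f') g')" using assoc[OF h(4) h(3) h(1) ob(3,2,1,2)] by simp
  also have "\<dots> = ide C c" using h ob by simp
  finally have 2: "cmp C (cmp C g f) (cmp C f' g') = ide C c" .
  show ?thesis unfolding iso_mor_def using 1 2 gf fg' by blast
qed

lemma iso_obj_refl: "a \<in> Ob C \<Longrightarrow> iso_obj C a a" unfolding iso_obj_def using iso_ide by blast
lemma iso_obj_sym: "iso_obj C a b \<Longrightarrow> iso_obj C b a" unfolding iso_obj_def
  proof - assume "\<exists>f. iso_mor C a b f" then obtain f where "iso_mor C a b f" by blast
    from iso_inv_iso[OF this] show "\<exists>f. iso_mor C b a f" by (rule exI) qed
lemma iso_obj_trans: "iso_obj C a b \<Longrightarrow> iso_obj C b c \<Longrightarrow> a \<in> Ob C \<Longrightarrow> b \<in> Ob C \<Longrightarrow> c \<in> Ob C \<Longrightarrow> iso_obj C a c"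
  unfolding iso_obj_def using iso_comp by blast

lemma zero_ob: "zero_object C z \<Longrightarrow> z \<in> Ob C" unfolding zero_object_def by blast
lemma zero_from_uniq: "zero_object C z \<Longrightarrow> f \<in> Hom C z b \<Longrightarrow> g \<in> Hom C z b \<Longrightarrow> b \<in> Ob C \<Longrightarrow> f = g"
  unfolding zero_object_def by blast
lemma zero_to_uniq: "zero_object C z \<Longrightarrow> f \<in> Hom C b z \<Longrightarrow> g \<in> Hom C b z \<Longrightarrow> b \<in> Ob C \<Longrightarrow> f = g"
  unfolding zero_object_def by blast
lemma zero_from_ex: "zero_object C z \<Longrightarrow> b \<in> Ob C \<Longrightarrow> \<exists>f. f \<in> Hom C z b"
  unfolding zero_object_def by blast
lemma zero_to_ex: "zero_object C z \<Longrightarrow> b \<in> Ob C \<Longrightarrow> \<exists>f. f \<in> Hom C b z"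
  unfolding zero_object_def by blast

lemma zero_morI: "zero_object C z \<Longrightarrow> g \<in> Hom C a z \<Longrightarrow> h \<in> Hom C z b \<Longrightarrow> a \<in> Ob C \<Longrightarrow> b \<in> Ob C \<Longrightarrow>
   zero_mor C a b (cmp C h g)"
  unfolding zero_mor_def using zero_ob comp_hom by blast
lemma zero_mor_hom: "zero_mor C a b f \<Longrightarrow> f \<in> Hom C a b" unfolding zero_mor_def by blast

lemma zero_mor_unique:
  assumes "zero_mor C a b f" "zero_mor C a b f'" "a \<in> Ob C" "b \<in> Ob C"
  shows "f = f'"
proof -
  obtain z g h where z: "zero_object C z" "g \<in> Hom C a z" "h \<in> Hom C z b" "f = cmp C h g"
    using assms(1) unfolding zero_mor_def by blast
  obtain z' g' h' where z': "zero_object C z'" "g' \<in> Hom C a z'" "h' \<in> Hom C z' b" "f' = cmp C h' g'"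
    using assms(2) unfolding zero_mor_def by blast
  obtain t where t: "t \<in> Hom C z z'" using zero_from_ex[OF z(1) zero_ob[OF z'(1)]] by blast
  have zz: "z \<in> Ob C" "z' \<in> Ob C" using z z' zero_ob by auto
  have tg: "cmp C t g \<in> Hom C a z'" using t z(2) zz assms by blast
  have ht: "cmp C h' t \<in> Hom C z b" using t z'(3) zz assms by blast
  have 1: "cmp C t g = g'" using zero_to_uniq[OF z'(1) tg z'(2)] assms by blast
  have 2: "cmp C h' t = h" using zero_from_uniq[OF z(1) ht z(3)] assms by blast
  have "f = cmp C (cmp C h' t) g" using z 2 by simp
  also have "\<dots> = cmp C h' (cmp C t g)" using assoc[OF z(2) t z'(3)] zz assms by simp
  also have "\<dots> = f'" using 1 z' by simp
  finally show ?thesis .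
qed

lemma zero_mor_ex: "zero_object C z \<Longrightarrow> a \<in> Ob C \<Longrightarrow> b \<in> Ob C \<Longrightarrow> \<exists>f. zero_mor C a b f"
  by (meson zero_from_ex zero_morI zero_to_ex)

lemma zero_comp_left: "zero_mor C a b f \<Longrightarrow> k \<in> Hom C b c \<Longrightarrow> a \<in> Ob C \<Longrightarrow> b \<in> Ob C \<Longrightarrow> c \<in> Ob C \<Longrightarrow>
   zero_mor C a c (cmp C k f)"
proof -
  assume f: "zero_mor C a b f" and k: "k \<in> Hom C b c" and ob: "a \<in> Ob C" "b \<in> Ob C" "c \<in> Ob C"
  obtain z g h where z: "zero_object C z" "g \<in> Hom C a z" "h \<in> Hom C z b" "f = cmp C h g"
    using f unfolding zero_mor_def by blast
  have zo: "z \<in> Ob C" using z zero_ob by blast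
  have "cmp C k f = cmp C (cmp C k h) g" using z assoc[OF z(2) z(3) k] zo ob by simp
  moreover have "cmp C k h \<in> Hom C z c" using z(3) k zo ob by blast
  ultimately show ?thesis using z ob zero_morI by simp
qed

lemma zero_comp_right: "zero_mor C b c f \<Longrightarrow> k \<in> Hom C a b \<Longrightarrow> a \<in> Ob C \<Longrightarrow> b \<in> Ob C \<Longrightarrow> c \<in> Ob C \<Longrightarrow>
   zero_mor C a c (cmp C f k)"
proof -
  assume f: "zero_mor C b c f" and k: "k \<in> Hom C a b" and ob: "a \<in> Ob C" "b \<in> Ob C" "c \<in> Ob C"
  obtain z g h where z: "zero_object C z" "g \<in> Hom C b z" "h \<in> Hom C z c" "f = cmp C h g"
    using f unfolding zero_mor_def by blast
  have zo: "z \<in> Ob C" using z zero_ob by blast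
  have "cmp C f k = cmp C h (cmp C g k)" using z assoc[OF k z(2) z(3)] zo ob by simp
  moreover have "cmp C g k \<in> Hom C a z" using z(2) k zo ob by blast
  ultimately show ?thesis using z ob zero_morI by simp
qed

lemma retract_zero:
  assumes z: "zero_object C z" and g: "g \<in> Hom C x z" and g': "g' \<in> Hom C z x"
    and gg: "cmp C g' g = ide C x" and x: "x \<in> Ob C"
  shows "zero_object C x"
proof -
  have zo: "z \<in> Ob C" using z zero_ob by blast
  { fix b assume b: "b \<in> Ob C"
    obtain fz where fz: "fz \<in> Hom C z b" using zero_from_ex[OF z b] by blast
    obtain tz where tz: "tz \<in> Hom C b z" using zero_to_ex[OF z b] by blast
    have e1: "cmp C fz g \<in> Hom C x b" using fz g x zo b by blast
    have u1: "f1 = f2" if f1: "f1 \<in> Hom C x b" and f2: "f2 \<in> Hom C x b" for f1 f2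
    proof -
      have h1: "cmp C f1 g' \<in> Hom C z b" "cmp C f2 g' \<in> Hom C z b" using f1 f2 g' x b zo by blast+
      have e: "cmp C f1 g' = cmp C f2 g'" using zero_from_uniq[OF z h1 b] .
      have "f1 = cmp C f1 (cmp C g' g)" using gg f1 x b by simp
      also have "\<dots> = cmp C (cmp C f1 g') g" using assoc[OF g g' f1 x zo x b] .
      also have "\<dots> = cmp C (cmp C f2 g') g" using e by simp
      also have "\<dots> = cmp C f2 (cmp C g' g)" using assoc[OF g g' f2 x zo x b] by simp
      also have "\<dots> = f2" using gg f2 x b by simp
      finally show ?thesis .
    qed
    have e2: "cmp C g' tz \<in> Hom C b x" using tz g' x zo b by blast
    have u2: "f1 = f2" if f1: "f1 \<in> Hom C b x" and f2: "f2 \<in> Hom C b x" for f1 f2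
    proof -
      have h1: "cmp C g f1 \<in> Hom C b z" "cmp C g f2 \<in> Hom C b z" using f1 f2 g x b zo by blast+
      have e: "cmp C g f1 = cmp C g f2" using zero_to_uniq[OF z h1 b] .
      have "f1 = cmp C (cmp C g' g) f1" using gg f1 x b by simp
      also have "\<dots> = cmp C g' (cmp C g f1)" using assoc[OF f1 g g' b x zo x] by simp
      also have "\<dots> = cmp C g' (cmp C g f2)" using e by simp
      also have "\<dots> = cmp C (cmp C g' g) f2" using assoc[OF f2 g g' b x zo x] .
      also have "\<dots> = f2" using gg f2 x b by simp
      finally show ?thesis .
    qed
    have "\<exists>!f. f \<in> Hom C x b"
    proof (rule ex1I)
      show "cmp C fz g \<in> Hom C x b" by (rule e1)
    next
      fix f assume "f \<in> Hom C x b" thus "f = cmp C fz g" by (rule u1[OF _ e1])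
    qed
    moreover have "\<exists>!f. f \<in> Hom C b x"
    proof (rule ex1I)
      show "cmp C g' tz \<in> Hom C b x" by (rule e2)
    next
      fix f assume "f \<in> Hom C b x" thus "f = cmp C g' tz" by (rule u2[OF _ e2])
    qed
    ultimately have "(\<exists>!f. f \<in> Hom C x b) \<and> (\<exists>!f. f \<in> Hom C b x)" by (rule conjI) }
  thus ?thesis unfolding zero_object_def using x by (intro conjI ballI) auto
qed

lemma iso_zero: "zero_object C z \<Longrightarrow> iso_mor C x z f \<Longrightarrow> x \<in> Ob C \<Longrightarrow> zero_object C x"
  using retract_zero[of z f x "inv_mor C x z f"] iso_inv[of C x z f] iso_hom[of C x z f] by blast
lemma iso_zero2: assumes "zero_object C z" "iso_mor C z x f" "x \<in> Ob C" shows "zero_object C x"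
  by (rule iso_zero[OF assms(1) iso_inv_iso[OF assms(2)] assms(3)])
lemma iso_obj_zero: assumes "zero_object C z" "iso_obj C x z" "x \<in> Ob C" shows "zero_object C x"
proof - obtain f where "iso_mor C x z f" using assms(2) unfolding iso_obj_def by blast
  from iso_zero[OF assms(1) this assms(3)] show ?thesis . qed

lemma mono_zero_obj:
  assumes m: "mono C x a m" and zm: "zero_mor C x a m" and ob: "x \<in> Ob C" "a \<in> Ob C"
  shows "zero_object C x"
proof -
  obtain z g h where z: "zero_object C z" "g \<in> Hom C x z" "h \<in> Hom C z a" "m = cmp C h g"
    using zm unfolding zero_mor_def by blast
  have zo: "z \<in> Ob C" using z zero_ob by blast
  obtain g' where g': "g' \<in> Hom C z x" using zero_from_ex[OF z(1) ob(1)] by blast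
  have mh: "m \<in> Hom C x a" using m unfolding mono_def by blast
  have gg: "cmp C g' g \<in> Hom C x x" using g' z(2) zo ob by blast
  have ggg: "cmp C g (cmp C g' g) \<in> Hom C x z" using gg z(2) zo ob by blast
  have 1: "cmp C g (cmp C g' g) = g" using zero_to_uniq[OF z(1) ggg z(2) ob(1)] .
  have "cmp C m (cmp C g' g) = cmp C h (cmp C g (cmp C g' g))"
    using z(4) assoc[OF gg z(2) z(3)] zo ob by simp
  also have "\<dots> = cmp C m (ide C x)" using 1 z(4) mh ob by simp
  finally have "cmp C m (cmp C g' g) = cmp C m (ide C x)" .
  hence "cmp C g' g = ide C x" using m gg ob unfolding mono_def by blast
  thus ?thesis using retract_zero z g' ob by blast
qed

lemma epi_zero_obj:
  assumes e: "epi C a x e" and ze: "zero_mor C a x e" and ob: "x \<in> Ob C" "a \<in> Ob C"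
  shows "zero_object C x"
proof -
  obtain z g h where z: "zero_object C z" "g \<in> Hom C a z" "h \<in> Hom C z x" "e = cmp C h g"
    using ze unfolding zero_mor_def by blast
  have zo: "z \<in> Ob C" using z zero_ob by blast
  obtain h' where h': "h' \<in> Hom C x z" using zero_to_ex[OF z(1) ob(1)] by blast
  have eh: "e \<in> Hom C a x" using e unfolding epi_def by blast
  have hh: "cmp C h h' \<in> Hom C x x" using h' z(3) zo ob by blast
  have hhh: "cmp C (cmp C h h') h \<in> Hom C z x" using hh z(3) zo ob by blast
  have 1: "cmp C (cmp C h h') h = h" using zero_from_uniq[OF z(1) hhh z(3) ob(1)] .
  have "cmp C (cmp C h h') e = cmp C (cmp C (cmp C h h') h) g"
    using z(4) assoc[OF z(2) z(3) hh] zo ob by simp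
  also have "\<dots> = cmp C (ide C x) e" using 1 z(4) eh ob by simp
  finally have "cmp C (cmp C h h') e = cmp C (ide C x) e" .
  hence "cmp C h h' = ide C x" using e hh ob unfolding epi_def by blast
  thus ?thesis using retract_zero z h' ob by blast
qed

lemma terminal_zero:
  assumes z: "zero_object C z" and t: "t \<in> Ob C" and trm: "\<forall>b\<in>Ob C. \<exists>!f. f \<in> Hom C b t"
  shows "zero_object C t"
proof -
  have zo: "z \<in> Ob C" using z zero_ob by blast
  obtain g where g: "g \<in> Hom C z t" using zero_from_ex[OF z t] by blast
  obtain g' where g': "g' \<in> Hom C t z" using zero_to_ex[OF z t] by blast
  have "cmp C g g' \<in> Hom C t t" using g g' zo t by blast
  hence "cmp C g g' = ide C t" using trm t ide_hom[OF t] by blast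
  thus ?thesis using retract_zero[OF z g' g] t by blast
qed

lemma initial_zero:
  assumes z: "zero_object C z" and t: "t \<in> Ob C" and ini: "\<forall>b\<in>Ob C. \<exists>!f. f \<in> Hom C t b"
  shows "zero_object C t"
proof -
  have zo: "z \<in> Ob C" using z zero_ob by blast
  obtain g where g: "g \<in> Hom C z t" using zero_from_ex[OF z t] by blast
  obtain g' where g': "g' \<in> Hom C t z" using zero_to_ex[OF z t] by blast
  have "cmp C g g' \<in> Hom C t t" using g g' zo t by blast
  hence "cmp C g g' = ide C t" using ini t ide_hom[OF t] by blast
  thus ?thesis using retract_zero[OF z g' g] t by blast
qed

lemma kernel_mono: assumes k: "is_kernel C a b f K k" and ob: "a \<in> Ob C" "b \<in> Ob C" shows "mono C K a k"
proof -
  have kk: "f \<in> Hom C a b" "K \<in> Ob C" "k \<in> Hom C K a" "zero_mor C K b (cmp C f k)"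
    "\<forall>c\<in>Ob C. \<forall>g\<in>Hom C c a. zero_mor C c b (cmp C f g) \<longrightarrow> (\<exists>!u. u \<in> Hom C c K \<and> cmp C k u = g)"
    using k unfolding is_kernel_def by blast+
  { fix c u v assume c: "c \<in> Ob C" and u: "u \<in> Hom C c K" and v: "v \<in> Hom C c K" and e: "cmp C k u = cmp C k v"
    have ku: "cmp C k u \<in> Hom C c a" using u kk c ob by blast
    have "cmp C f (cmp C k u) = cmp C (cmp C f k) u" using assoc[OF u kk(3) kk(1) c kk(2) ob] .
    hence z: "zero_mor C c b (cmp C f (cmp C k u))" using zero_comp_right[OF kk(4) u c kk(2) ob(2)] by simp
    have "u = v" by (rule ex1_eq[OF kk(5)[rule_format, OF c ku z]]) (simp_all add: u v e) }
  thus ?thesis unfolding mono_def using kk by blast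
qed

lemma cokernel_epi: assumes k: "is_cokernel C a b f Q q" and ob: "a \<in> Ob C" "b \<in> Ob C" shows "epi C b Q q"
proof -
  have kk: "f \<in> Hom C a b" "Q \<in> Ob C" "q \<in> Hom C b Q" "zero_mor C a Q (cmp C q f)"
    "\<forall>c\<in>Ob C. \<forall>g\<in>Hom C b c. zero_mor C a c (cmp C g f) \<longrightarrow> (\<exists>!u. u \<in> Hom C Q c \<and> cmp C u q = g)"
    using k unfolding is_cokernel_def by blast+
  { fix c u v assume c: "c \<in> Ob C" and u: "u \<in> Hom C Q c" and v: "v \<in> Hom C Q c" and e: "cmp C u q = cmp C v q"
    have ku: "cmp C u q \<in> Hom C b c" using u kk c ob by blast
    have "cmp C (cmp C u q) f = cmp C u (cmp C q f)" using assoc[OF kk(1) kk(3) u ob kk(2) c] by simp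
    hence z: "zero_mor C a c (cmp C (cmp C u q) f)" using zero_comp_left[OF kk(4) u ob(1) kk(2) c] by simp
    have "u = v" by (rule ex1_eq[OF kk(5)[rule_format, OF c ku z]]) (simp_all add: u v e) }
  thus ?thesis unfolding epi_def using kk by blast
qed

lemma monoD: "mono C a b m \<Longrightarrow> x \<in> Ob C \<Longrightarrow> u \<in> Hom C x a \<Longrightarrow> v \<in> Hom C x a \<Longrightarrow> cmp C m u = cmp C m v \<Longrightarrow> u = v"
  unfolding mono_def by blast
lemma epiD: "epi C a b e \<Longrightarrow> x \<in> Ob C \<Longrightarrow> u \<in> Hom C b x \<Longrightarrow> v \<in> Hom C b x \<Longrightarrow> cmp C u e = cmp C v e \<Longrightarrow> u = v"
  unfolding epi_def by blast
lemma mono_hom: "mono C a b m \<Longrightarrow> m \<in> Hom C a b" unfolding mono_def by blast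
lemma epi_hom: "epi C a b m \<Longrightarrow> m \<in> Hom C a b" unfolding epi_def by blast

lemma mono_comp: assumes f: "mono C a b f" and g: "mono C b c g" and ob: "a \<in> Ob C" "b \<in> Ob C" "c \<in> Ob C"
  shows "mono C a c (cmp C g f)"
proof -
  have fh: "f \<in> Hom C a b" and gh: "g \<in> Hom C b c" using f g unfolding mono_def by blast+
  { fix x u v assume x: "x \<in> Ob C" and u: "u \<in> Hom C x a" and v: "v \<in> Hom C x a" and e: "cmp C (cmp C g f) u = cmp C (cmp C g f) v"
    have "cmp C g (cmp C f u) = cmp C g (cmp C f v)" using e assoc[OF u fh gh x ob] assoc[OF v fh gh x ob] by simp
    hence "cmp C f u = cmp C f v" using g x u v fh ob unfolding mono_def by (meson comp_hom)
    hence "u = v" using f x u v unfolding mono_def by blast }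
  thus ?thesis unfolding mono_def using fh gh ob by blast
qed

end



lemma fo_ob: "is_functor C D F \<Longrightarrow> a \<in> Ob C \<Longrightarrow> fo F a \<in> Ob D"
  unfolding is_functor_def by blast
lemma fm_hom: "is_functor C D F \<Longrightarrow> f \<in> Hom C a b \<Longrightarrow> a \<in> Ob C \<Longrightarrow> b \<in> Ob C \<Longrightarrow> fm F f \<in> Hom D (fo F a) (fo F b)"
  unfolding is_functor_def by blast
lemma fm_ide: "is_functor C D F \<Longrightarrow> a \<in> Ob C \<Longrightarrow> fm F (ide C a) = ide D (fo F a)"
  unfolding is_functor_def by blast
lemma fm_comp: "is_functor C D F \<Longrightarrow> f \<in> Hom C a b \<Longrightarrow> g \<in> Hom C b c \<Longrightarrow> a \<in> Ob C \<Longrightarrow> b \<in> Ob C \<Longrightarrow> c \<in> Ob C \<Longrightarrow>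
  fm F (cmp C g f) = cmp D (fm F g) (fm F f)"
  unfolding is_functor_def by blast

lemma fm_iso: "is_functor C D F \<Longrightarrow> iso_mor C a b f \<Longrightarrow> a \<in> Ob C \<Longrightarrow> b \<in> Ob C \<Longrightarrow> iso_mor D (fo F a) (fo F b) (fm F f)"
proof -
  assume F: "is_functor C D F" and f: "iso_mor C a b f" and ob: "a \<in> Ob C" "b \<in> Ob C"
  note i = iso_inv[OF f] iso_hom[OF f]
  have "cmp D (fm F (inv_mor C a b f)) (fm F f) = ide D (fo F a)"
    using fm_comp[OF F i(4) i(1) ob ob(1)] i fm_ide[OF F ob(1)] by simp
  moreover have "cmp D (fm F f) (fm F (inv_mor C a b f)) = ide D (fo F b)"
    using fm_comp[OF F i(1) i(4) ob(2) ob] i fm_ide[OF F ob(2)] by simp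
  moreover have "fm F (inv_mor C a b f) \<in> Hom D (fo F b) (fo F a)" using fm_hom[OF F i(1) ob(2,1)] .
  moreover have "fm F f \<in> Hom D (fo F a) (fo F b)" using fm_hom[OF F i(4) ob] .
  ultimately show ?thesis unfolding iso_mor_def by blast
qed

lemma fm_inv: "category D \<Longrightarrow> is_functor C D F \<Longrightarrow> iso_mor C a b f \<Longrightarrow> a \<in> Ob C \<Longrightarrow> b \<in> Ob C \<Longrightarrow>
   fm F (inv_mor C a b f) = inv_mor D (fo F a) (fo F b) (fm F f)"
proof -
  assume D: "category D" and F: "is_functor C D F" and f: "iso_mor C a b f" and ob: "a \<in> Ob C" "b \<in> Ob C"
  interpret D: cat D using D by unfold_locales
  note i = iso_inv[OF f] iso_hom[OF f]
  have "cmp D (fm F (inv_mor C a b f)) (fm F f) = ide D (fo F a)"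
    using fm_comp[OF F i(4) i(1) ob ob(1)] i fm_ide[OF F ob(1)] by simp
  thus ?thesis by (rule D.inv_unique[OF fm_iso[OF F f ob] fm_hom[OF F i(1) ob(2,1)] _ fo_ob[OF F ob(1)] fo_ob[OF F ob(2)]])
qed

lemma fo_iso_obj: assumes "is_functor C D F" "iso_obj C a b" "a \<in> Ob C" "b \<in> Ob C" shows "iso_obj D (fo F a) (fo F b)"
proof - obtain f where "iso_mor C a b f" using assms(2) unfolding iso_obj_def by blast
  from fm_iso[OF assms(1) this assms(3,4)] show ?thesis unfolding iso_obj_def by (rule exI) qed

lemma nt_hom: "nat_trans C D F G eta \<Longrightarrow> a \<in> Ob C \<Longrightarrow> eta a \<in> Hom D (fo F a) (fo G a)"
  unfolding nat_trans_def by blast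
lemma nt_nat: "nat_trans C D F G eta \<Longrightarrow> f \<in> Hom C a b \<Longrightarrow> a \<in> Ob C \<Longrightarrow> b \<in> Ob C \<Longrightarrow>
   cmp D (eta b) (fm F f) = cmp D (fm G f) (eta a)"
  unfolding nat_trans_def by blast
lemma ni_nt: "nat_iso C D F G eta \<Longrightarrow> nat_trans C D F G eta" unfolding nat_iso_def by blast
lemma ni_iso: "nat_iso C D F G eta \<Longrightarrow> a \<in> Ob C \<Longrightarrow> iso_mor D (fo F a) (fo G a) (eta a)"
  unfolding nat_iso_def by blast

section \<open>Adjunctions\<close>

locale adj = C: cat C + D: cat D for C :: "('o1, 'm1) cat" and D :: "('o2, 'm2) cat" +
  fixes L :: "('o1, 'm1, 'o2, 'm2) ftr" and R :: "('o2, 'm2, 'o1, 'm1) ftr" and eta eps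
  assumes adjunction: "adjunction C D L R eta eps"
begin

lemma L: "is_functor C D L" and R: "is_functor D C R"
  using adjunction unfolding adjunction_def by blast+

lemma eta_hom: "a \<in> Ob C \<Longrightarrow> eta a \<in> Hom C a (fo R (fo L a))"
  using adjunction nt_hom[of C C fid "fcomp R L" eta a] unfolding adjunction_def by simp
lemma eps_hom: "b \<in> Ob D \<Longrightarrow> eps b \<in> Hom D (fo L (fo R b)) b"
  using adjunction nt_hom[of D D "fcomp L R" fid eps b] unfolding adjunction_def by simp
lemma eta_nat: "f \<in> Hom C a b \<Longrightarrow> a \<in> Ob C \<Longrightarrow> b \<in> Ob C \<Longrightarrow> cmp C (eta b) f = cmp C (fm R (fm L f)) (eta a)"
  using adjunction nt_nat[of C C fid "fcomp R L" eta f a b] unfolding adjunction_def by simp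
lemma eps_nat: "g \<in> Hom D a b \<Longrightarrow> a \<in> Ob D \<Longrightarrow> b \<in> Ob D \<Longrightarrow> cmp D (eps b) (fm L (fm R g)) = cmp D g (eps a)"
  using adjunction nt_nat[of D D "fcomp L R" fid eps g a b] unfolding adjunction_def by simp
lemma tri1: "a \<in> Ob C \<Longrightarrow> cmp D (eps (fo L a)) (fm L (eta a)) = ide D (fo L a)"
  using adjunction unfolding adjunction_def by blast
lemma tri2: "b \<in> Ob D \<Longrightarrow> cmp C (fm R (eps b)) (eta (fo R b)) = ide C (fo R b)"
  using adjunction unfolding adjunction_def by blast

lemmas Lob = fo_ob[OF L] and Rob = fo_ob[OF R] and Lhom = fm_hom[OF L] and Rhom = fm_hom[OF R]
  and Lcomp = fm_comp[OF L] and Rcomp = fm_comp[OF R] and Lide = fm_ide[OF L] and Ride = fm_ide[OF R]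

lemma transpose1:
  assumes g: "g \<in> Hom C a (fo R b)" and a: "a \<in> Ob C" and b: "b \<in> Ob D"
  shows "g = cmp C (fm R (cmp D (eps b) (fm L g))) (eta a)"
proof -
  have Rb: "fo R b \<in> Ob C" using Rob b by blast
  have "cmp C (fm R (cmp D (eps b) (fm L g))) (eta a) = cmp C (cmp C (fm R (eps b)) (fm R (fm L g))) (eta a)"
    using Rcomp[OF Lhom[OF g a Rb] eps_hom[OF b]] Lob a Rb b by simp
  also have "\<dots> = cmp C (fm R (eps b)) (cmp C (fm R (fm L g)) (eta a))"
    using C.assoc[OF eta_hom[OF a] Rhom[OF Lhom[OF g a Rb]] Rhom[OF eps_hom[OF b]]] Lob Rob a Rb b by simp
  also have "\<dots> = cmp C (fm R (eps b)) (cmp C (eta (fo R b)) g)"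
    using eta_nat[OF g a Rb] by simp
  also have "\<dots> = cmp C (cmp C (fm R (eps b)) (eta (fo R b))) g"
    using C.assoc[OF g eta_hom[OF Rb] Rhom[OF eps_hom[OF b]]] Lob Rob a Rb b by simp
  also have "\<dots> = g" using tri2[OF b] g a Rb by simp
  finally show ?thesis by simp
qed

lemma transpose2:
  assumes f: "f \<in> Hom D (fo L a) b" and a: "a \<in> Ob C" and b: "b \<in> Ob D"
  shows "f = cmp D (eps b) (fm L (cmp C (fm R f) (eta a)))"
proof -
  have La: "fo L a \<in> Ob D" using Lob a by blast
  have "cmp D (eps b) (fm L (cmp C (fm R f) (eta a))) = cmp D (eps b) (cmp D (fm L (fm R f)) (fm L (eta a)))"
    using Lcomp[OF eta_hom[OF a] Rhom[OF f La b]] Rob Lob a La b by simp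
  also have "\<dots> = cmp D (cmp D (eps b) (fm L (fm R f))) (fm L (eta a))"
    using D.assoc[OF Lhom[OF eta_hom[OF a]] Lhom[OF Rhom[OF f La b]] eps_hom[OF b]] Lob Rob a La b by simp
  also have "\<dots> = cmp D (cmp D f (eps (fo L a))) (fm L (eta a))"
    using eps_nat[OF f La b] by simp
  also have "\<dots> = cmp D f (cmp D (eps (fo L a)) (fm L (eta a)))"
    using D.assoc[OF Lhom[OF eta_hom[OF a]] eps_hom[OF La] f] Lob Rob a La b by simp
  also have "\<dots> = f" using tri1[OF a] f La b by simp
  finally show ?thesis by simp
qed

lemma L_epi:
  assumes e: "epi C a a' c" and ob: "a \<in> Ob C" "a' \<in> Ob C"
  shows "epi D (fo L a) (fo L a') (fm L c)"
proof -
  have c: "c \<in> Hom C a a'" using e unfolding epi_def by blast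
  { fix T g h assume T: "T \<in> Ob D" and g: "g \<in> Hom D (fo L a') T" and h: "h \<in> Hom D (fo L a') T"
      and eq: "cmp D g (fm L c) = cmp D h (fm L c)"
    have La: "fo L a \<in> Ob D" "fo L a' \<in> Ob D" using Lob ob by auto
    have RT: "fo R T \<in> Ob C" using Rob T by blast
    have tr: "cmp C (cmp C (fm R k) (eta a')) c = cmp C (fm R (cmp D k (fm L c))) (eta a)" if k: "k \<in> Hom D (fo L a') T" for k
    proof -
      have "cmp C (cmp C (fm R k) (eta a')) c = cmp C (fm R k) (cmp C (eta a') c)"
        using C.assoc[OF c eta_hom[OF ob(2)] Rhom[OF k La(2) T]] ob Rob La T by simp
      also have "\<dots> = cmp C (fm R k) (cmp C (fm R (fm L c)) (eta a))" using eta_nat[OF c ob] by simp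
      also have "\<dots> = cmp C (cmp C (fm R k) (fm R (fm L c))) (eta a)"
        using C.assoc[OF eta_hom[OF ob(1)] Rhom[OF Lhom[OF c ob] La] Rhom[OF k La(2) T]] ob Rob La T by simp
      also have "\<dots> = cmp C (fm R (cmp D k (fm L c))) (eta a)"
        using Rcomp[OF Lhom[OF c ob] k La T] by simp
      finally show ?thesis .
    qed
    have eqc: "cmp C (cmp C (fm R g) (eta a')) c = cmp C (cmp C (fm R h) (eta a')) c"
      using tr[OF g] tr[OF h] eq by simp
    have h1: "cmp C (fm R g) (eta a') \<in> Hom C a' (fo R T)"
      using C.comp_hom[OF eta_hom[OF ob(2)] Rhom[OF g La(2) T]] ob RT Rob La by blast
    have h2: "cmp C (fm R h) (eta a') \<in> Hom C a' (fo R T)"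
      using C.comp_hom[OF eta_hom[OF ob(2)] Rhom[OF h La(2) T]] ob RT Rob La by blast
    have "cmp C (fm R g) (eta a') = cmp C (fm R h) (eta a')"
      by (rule C.epiD[OF e RT h1 h2 eqc])
    hence "g = h" using transpose2[OF g ob(2) T] transpose2[OF h ob(2) T] by simp }
  thus ?thesis unfolding epi_def using Lhom[OF c ob] by blast
qed

lemma R_mono:
  assumes m: "mono D b b' m" and ob: "b \<in> Ob D" "b' \<in> Ob D"
  shows "mono C (fo R b) (fo R b') (fm R m)"
proof -
  have mh: "m \<in> Hom D b b'" using m unfolding mono_def by blast
  have Rb: "fo R b \<in> Ob C" "fo R b' \<in> Ob C" using Rob ob by auto
  { fix x u v assume x: "x \<in> Ob C" and u: "u \<in> Hom C x (fo R b)" and v: "v \<in> Hom C x (fo R b)"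
      and eq: "cmp C (fm R m) u = cmp C (fm R m) v"
    have Lx: "fo L x \<in> Ob D" using Lob x by blast
    have tr: "cmp D m (cmp D (eps b) (fm L k)) = cmp D (eps b') (fm L (cmp C (fm R m) k))" if k: "k \<in> Hom C x (fo R b)" for k
    proof -
      have "cmp D m (cmp D (eps b) (fm L k)) = cmp D (cmp D m (eps b)) (fm L k)"
        using D.assoc[OF Lhom[OF k x Rb(1)] eps_hom[OF ob(1)] mh] Lob Rb x ob by simp
      also have "\<dots> = cmp D (cmp D (eps b') (fm L (fm R m))) (fm L k)" using eps_nat[OF mh ob] by simp
      also have "\<dots> = cmp D (eps b') (cmp D (fm L (fm R m)) (fm L k))"
        using D.assoc[OF Lhom[OF k x Rb(1)] Lhom[OF Rhom[OF mh ob] Rb] eps_hom[OF ob(2)]] Lob Rb x ob by simp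
      also have "\<dots> = cmp D (eps b') (fm L (cmp C (fm R m) k))"
        using Lcomp[OF k Rhom[OF mh ob] x Rb] by simp
      finally show ?thesis .
    qed
    have LRb: "fo L (fo R b) \<in> Ob D" using Lob Rb by blast
    have h1: "cmp D (eps b) (fm L u) \<in> Hom D (fo L x) b" using D.comp_hom[OF Lhom[OF u x Rb(1)] eps_hom[OF ob(1)] Lx LRb ob(1)] .
    have h2: "cmp D (eps b) (fm L v) \<in> Hom D (fo L x) b" using D.comp_hom[OF Lhom[OF v x Rb(1)] eps_hom[OF ob(1)] Lx LRb ob(1)] .
    have "cmp D (eps b) (fm L u) = cmp D (eps b) (fm L v)"
      using D.monoD[OF m Lx h1 h2] tr[OF u] tr[OF v] eq by simp
    hence "u = v" using transpose1[OF u x ob(1)] transpose1[OF v x ob(1)] by simp }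
  thus ?thesis unfolding mono_def using Rhom[OF mh ob] by blast
qed

lemma R_terminal:
  assumes t: "t \<in> Ob D" and trm: "\<forall>b\<in>Ob D. \<exists>!f. f \<in> Hom D b t"
  shows "\<forall>x\<in>Ob C. \<exists>!f. f \<in> Hom C x (fo R t)"
proof
  fix x assume x: "x \<in> Ob C"
  have Lx: "fo L x \<in> Ob D" using Lob x by blast
  obtain k where k: "k \<in> Hom D (fo L x) t" using trm Lx by blast
  have ex: "cmp C (fm R k) (eta x) \<in> Hom C x (fo R t)"
    using C.comp_hom[OF eta_hom[OF x] Rhom[OF k Lx t] x] Rob Lob t Lx by blast
  { fix u v assume u: "u \<in> Hom C x (fo R t)" and v: "v \<in> Hom C x (fo R t)"
    have LRt: "fo L (fo R t) \<in> Ob D" using Lob Rob t by blast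
    have h1: "cmp D (eps t) (fm L u) \<in> Hom D (fo L x) t" using D.comp_hom[OF Lhom[OF u x Rob[OF t]] eps_hom[OF t] Lx LRt t] .
    have h2: "cmp D (eps t) (fm L v) \<in> Hom D (fo L x) t" using D.comp_hom[OF Lhom[OF v x Rob[OF t]] eps_hom[OF t] Lx LRt t] .
    have "cmp D (eps t) (fm L u) = cmp D (eps t) (fm L v)"
      by (rule ex1_eq[OF trm[rule_format, OF Lx] h1 h2])
    hence "u = v" using transpose1[OF u x t] transpose1[OF v x t] by simp }
  thus "\<exists>!f. f \<in> Hom C x (fo R t)" using ex by (intro ex1I) auto
qed

lemma L_initial:
  assumes t: "t \<in> Ob C" and ini: "\<forall>b\<in>Ob C. \<exists>!f. f \<in> Hom C t b"
  shows "\<forall>y\<in>Ob D. \<exists>!f. f \<in> Hom D (fo L t) y"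
proof
  fix y assume y: "y \<in> Ob D"
  have Ry: "fo R y \<in> Ob C" using Rob y by blast
  obtain k where k: "k \<in> Hom C t (fo R y)" using ini Ry by blast
  have ex: "cmp D (eps y) (fm L k) \<in> Hom D (fo L t) y"
    using D.comp_hom[OF Lhom[OF k t Ry] eps_hom[OF y]] y Rob Lob t Ry by blast
  { fix u v assume u: "u \<in> Hom D (fo L t) y" and v: "v \<in> Hom D (fo L t) y"
    have Lt: "fo L t \<in> Ob D" and RLt: "fo R (fo L t) \<in> Ob C" using Lob Rob t by blast+
    have h1: "cmp C (fm R u) (eta t) \<in> Hom C t (fo R y)" using C.comp_hom[OF eta_hom[OF t] Rhom[OF u Lt y] t RLt Ry] .
    have h2: "cmp C (fm R v) (eta t) \<in> Hom C t (fo R y)" using C.comp_hom[OF eta_hom[OF t] Rhom[OF v Lt y] t RLt Ry] .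
    have "cmp C (fm R u) (eta t) = cmp C (fm R v) (eta t)"
      by (rule ex1_eq[OF ini[rule_format, OF Ry] h1 h2])
    hence "u = v" using transpose2[OF u t y] transpose2[OF v t y] by simp }
  thus "\<exists>!f. f \<in> Hom D (fo L t) y" using ex by (intro ex1I) auto
qed

lemma eta_R_iso:
  assumes w: "w \<in> Ob D" and e: "iso_mor D (fo L (fo R w)) w (eps w)"
  shows "iso_mor C (fo R w) (fo R (fo L (fo R w))) (eta (fo R w))"
proof -
  have Rw: "fo R w \<in> Ob C" using Rob w by blast
  have LRw: "fo L (fo R w) \<in> Ob D" using Lob Rw by blast
  have Ri: "iso_mor C (fo R (fo L (fo R w))) (fo R w) (fm R (eps w))" using fm_iso[OF R e LRw w] .
  have "eta (fo R w) = inv_mor C (fo R (fo L (fo R w))) (fo R w) (fm R (eps w))"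
    using C.inv_unique2[OF Ri eta_hom[OF Rw] tri2[OF w]] Rob LRw Rw by blast
  thus ?thesis using iso_inv_iso[OF Ri] by simp
qed

lemma determined:
  assumes V: "V \<in> Ob C" and iV: "iso_mor C V (fo R (fo L V)) (eta V)" and U: "U \<in> Ob C"
    and u: "u \<in> Hom C U V" and v: "v \<in> Hom C U V" and eq: "fm L u = fm L v"
  shows "u = v"
proof -
  have LV: "fo R (fo L V) \<in> Ob C" using Rob Lob V by blast
  have "cmp C (eta V) u = cmp C (eta V) v"
    using eta_nat[OF u U V] eta_nat[OF v U V] eq by simp
  thus ?thesis using C.iso_cancel_left[OF iV u v _ U V LV] by blast
qed

lemma lift:
  assumes V: "V \<in> Ob C" and iV: "iso_mor C V (fo R (fo L V)) (eta V)" and U: "U \<in> Ob C"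
    and phi: "phi \<in> Hom D (fo L U) (fo L V)"
  shows "\<exists>psi \<in> Hom C U V. fm L psi = phi"
proof -
  define ei where "ei = inv_mor C V (fo R (fo L V)) (eta V)"
  have LU: "fo L U \<in> Ob D" and LV: "fo L V \<in> Ob D" using Lob U V by auto
  have RLU: "fo R (fo L U) \<in> Ob C" and RLV: "fo R (fo L V) \<in> Ob C" using Rob LU LV by auto
  have LRLV: "fo L (fo R (fo L V)) \<in> Ob D" using Lob RLV by blast
  note ii = iso_inv[OF iV, folded ei_def]
  define psi where "psi = cmp C ei (cmp C (fm R phi) (eta U))"
  have psi0: "cmp C (fm R phi) (eta U) \<in> Hom C U (fo R (fo L V))" using C.comp_hom[OF eta_hom[OF U] Rhom[OF phi LU LV] U RLU RLV] .
  have psi: "psi \<in> Hom C U V" unfolding psi_def using C.comp_hom[OF psi0 ii(1) U RLV V] .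
  have Lei: "fm L ei = eps (fo L V)"
  proof -
    have "fm L ei = cmp D (cmp D (eps (fo L V)) (fm L (eta V))) (fm L ei)"
      using tri1[OF V] Lhom[OF ii(1) RLV V] LV LRLV by simp
    also have "\<dots> = cmp D (eps (fo L V)) (cmp D (fm L (eta V)) (fm L ei))"
      using D.assoc[OF Lhom[OF ii(1) RLV V] Lhom[OF eta_hom[OF V] V RLV] eps_hom[OF LV]] LV LRLV by simp
    also have "\<dots> = cmp D (eps (fo L V)) (fm L (ide C (fo R (fo L V))))"
      using Lcomp[OF ii(1) eta_hom[OF V] RLV V RLV] ii(3) by simp
    also have "\<dots> = eps (fo L V)" using Lide[OF RLV] eps_hom[OF LV] LRLV LV by simp
    finally show ?thesis .
  qed
  have "fm L psi = cmp D (fm L ei) (fm L (cmp C (fm R phi) (eta U)))"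
    unfolding psi_def using Lcomp[OF psi0 ii(1) U RLV V] .
  also have "\<dots> = cmp D (fm L ei) (cmp D (fm L (fm R phi)) (fm L (eta U)))"
    using Lcomp[OF eta_hom[OF U] Rhom[OF phi LU LV] U RLU RLV] by simp
  also have "\<dots> = cmp D (eps (fo L V)) (cmp D (fm L (fm R phi)) (fm L (eta U)))" using Lei by simp
  also have "\<dots> = cmp D (cmp D (eps (fo L V)) (fm L (fm R phi))) (fm L (eta U))"
    using D.assoc[OF Lhom[OF eta_hom[OF U] U RLU] Lhom[OF Rhom[OF phi LU LV] RLU RLV] eps_hom[OF LV]] LU LV Lob RLU LRLV by simp
  also have "\<dots> = cmp D (cmp D phi (eps (fo L U))) (fm L (eta U))" using eps_nat[OF phi LU LV] by simp
  also have "\<dots> = cmp D phi (cmp D (eps (fo L U)) (fm L (eta U)))"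
    using D.assoc[OF Lhom[OF eta_hom[OF U] U RLU] eps_hom[OF LU] phi] LU LV Lob RLU by simp
  also have "\<dots> = phi" using tri1[OF U] phi LU LV by simp
  finally show ?thesis using psi by blast
qed

end



locale abcat = cat + assumes abelian: "abelian C"
begin

lemma ab_axs:
  "\<exists>z. zero_object C z"
  "\<forall>a\<in>Ob C. \<forall>b\<in>Ob C. has_product C a b \<and> has_coproduct C a b"
  "\<forall>a\<in>Ob C. \<forall>b\<in>Ob C. \<forall>f\<in>Hom C a b. (\<exists>K k. is_kernel C a b f K k) \<and> (\<exists>Q q. is_cokernel C a b f Q q)"
  "\<forall>a\<in>Ob C. \<forall>b\<in>Ob C. \<forall>f. mono C a b f \<longrightarrow> (\<exists>c\<in>Ob C. \<exists>g\<in>Hom C b c. is_kernel C b c g a f)"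
  "\<forall>a\<in>Ob C. \<forall>b\<in>Ob C. \<forall>f. epi C a b f \<longrightarrow> (\<exists>c\<in>Ob C. \<exists>g\<in>Hom C c a. is_cokernel C c a g b f)"
  using conjunct1[OF conjunct2[OF abelian[unfolded abelian_def]]]
    conjunct1[OF conjunct2[OF conjunct2[OF abelian[unfolded abelian_def]]]]
    conjunct1[OF conjunct2[OF conjunct2[OF conjunct2[OF abelian[unfolded abelian_def]]]]]
    conjunct1[OF conjunct2[OF conjunct2[OF conjunct2[OF conjunct2[OF abelian[unfolded abelian_def]]]]]]
    conjunct2[OF conjunct2[OF conjunct2[OF conjunct2[OF conjunct2[OF abelian[unfolded abelian_def]]]]]]
  by - (assumption)+

lemma has_zero: obtains z where "zero_object C z" using ab_axs(1) by blast

lemma has_ker: assumes "f \<in> Hom C a b" "a \<in> Ob C" "b \<in> Ob C" obtains K k where "is_kernel C a b f K k"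
  using ab_axs(3) assms by blast
lemma has_coker: assumes "f \<in> Hom C a b" "a \<in> Ob C" "b \<in> Ob C" obtains Q q where "is_cokernel C a b f Q q"
  using ab_axs(3) assms by blast
lemma normal_mono: assumes "mono C a b f" "a \<in> Ob C" "b \<in> Ob C" obtains c g where "c \<in> Ob C" "g \<in> Hom C b c" "is_kernel C b c g a f"
  using ab_axs(4) assms by blast
lemma normal_epi: assumes "epi C a b f" "a \<in> Ob C" "b \<in> Ob C" obtains c g where "c \<in> Ob C" "g \<in> Hom C c a" "is_cokernel C c a g b f"
  using ab_axs(5) assms by blast
lemma has_prod: assumes "a \<in> Ob C" "b \<in> Ob C"
  obtains p p1 p2 where "p \<in> Ob C" "p1 \<in> Hom C p a" "p2 \<in> Hom C p b"
    "\<forall>c\<in>Ob C. \<forall>f\<in>Hom C c a. \<forall>g\<in>Hom C c b. (\<exists>!u. u \<in> Hom C c p \<and> cmp C p1 u = f \<and> cmp C p2 u = g)"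
proof -
  have "has_product C a b" using ab_axs(2) assms by blast
  thus ?thesis using that unfolding has_product_def by blast
qed

end

context cat
begin

lemma kerD: "is_kernel C a b f K k \<Longrightarrow> f \<in> Hom C a b \<and> K \<in> Ob C \<and> k \<in> Hom C K a \<and> zero_mor C K b (cmp C f k)"
  unfolding is_kernel_def by blast
lemma ker_fac: "is_kernel C a b f K k \<Longrightarrow> c \<in> Ob C \<Longrightarrow> g \<in> Hom C c a \<Longrightarrow> zero_mor C c b (cmp C f g) \<Longrightarrow>
   \<exists>u. u \<in> Hom C c K \<and> cmp C k u = g"
  unfolding is_kernel_def by blast
lemma cokerD: "is_cokernel C a b f Q q \<Longrightarrow> f \<in> Hom C a b \<and> Q \<in> Ob C \<and> q \<in> Hom C b Q \<and> zero_mor C a Q (cmp C q f)"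
  unfolding is_cokernel_def by blast
lemma coker_fac: "is_cokernel C a b f Q q \<Longrightarrow> c \<in> Ob C \<Longrightarrow> g \<in> Hom C b c \<Longrightarrow> zero_mor C a c (cmp C g f) \<Longrightarrow>
   \<exists>u. u \<in> Hom C Q c \<and> cmp C u q = g"
  unfolding is_cokernel_def by blast

end

context abcat
begin

lemma kerzero_mono:
  assumes f: "f \<in> Hom C a b" and ob: "a \<in> Ob C" "b \<in> Ob C"
    and H: "\<And>x t. x \<in> Ob C \<Longrightarrow> t \<in> Hom C x a \<Longrightarrow> zero_mor C x b (cmp C f t) \<Longrightarrow> zero_mor C x a t"
  shows "mono C a b f"
proof -
  obtain Q q where cq: "is_cokernel C a b f Q q" using has_coker[OF f ob] by blast
  note cqD = cokerD[OF cq]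
  have Q: "Q \<in> Ob C" and q: "q \<in> Hom C b Q" and zq: "zero_mor C a Q (cmp C q f)" using cqD by blast+
  obtain I m where km: "is_kernel C b Q q I m" using has_ker[OF q ob(2) Q] by blast
  note kmD = kerD[OF km]
  have I: "I \<in> Ob C" and m: "m \<in> Hom C I b" and zm: "zero_mor C I Q (cmp C q m)" using kmD by blast+
  obtain e where e: "e \<in> Hom C a I" and me: "cmp C m e = f" using ker_fac[OF km ob(1) f zq] by blast
  have mmono: "mono C I b m" using kernel_mono[OF km ob(2) Q] .
  have eepi: "epi C a I e"
  proof -
    { fix c x y assume c: "c \<in> Ob C" and x: "x \<in> Hom C I c" and y: "y \<in> Hom C I c" and exy: "cmp C x e = cmp C y e"
      obtain P p1 p2 where P: "P \<in> Ob C" and p1: "p1 \<in> Hom C P c" and p2: "p2 \<in> Hom C P c"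
        and PU: "\<forall>d\<in>Ob C. \<forall>f\<in>Hom C d c. \<forall>g\<in>Hom C d c. (\<exists>!u. u \<in> Hom C d P \<and> cmp C p1 u = f \<and> cmp C p2 u = g)"
        using has_prod[OF c c] by blast
      obtain dl where dl: "dl \<in> Hom C c P" and dl1: "cmp C p1 dl = ide C c" and dl2: "cmp C p2 dl = ide C c"
        using PU[rule_format, OF c ide_hom[OF c] ide_hom[OF c]] by blast
      have dlmono: "mono C c P dl"
      proof -
        { fix z u v assume z: "z \<in> Ob C" and u: "u \<in> Hom C z c" and v: "v \<in> Hom C z c" and uv: "cmp C dl u = cmp C dl v"
          have "u = cmp C (cmp C p1 dl) u" using dl1 u z c by simp
          also have "\<dots> = cmp C p1 (cmp C dl u)" using assoc[OF u dl p1 z c P c] by simp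
          also have "\<dots> = cmp C p1 (cmp C dl v)" using uv by simp
          also have "\<dots> = cmp C (cmp C p1 dl) v" using assoc[OF v dl p1 z c P c] .
          also have "\<dots> = v" using dl1 v z c by simp
          finally have "u = v" . }
        thus ?thesis unfolding mono_def using dl by blast
      qed
      obtain D d where D: "D \<in> Ob C" and d: "d \<in> Hom C P D" and kd: "is_kernel C P D d c dl"
        using normal_mono[OF dlmono c P] by blast
      have zd: "zero_mor C c D (cmp C d dl)" using kerD[OF kd] by blast
      obtain s where s: "s \<in> Hom C I P" and s1: "cmp C p1 s = x" and s2: "cmp C p2 s = y"
        using PU[rule_format, OF I x y] by blast
      have ds: "cmp C d s \<in> Hom C I D" using s d I P D by blast
      obtain W w where kw: "is_kernel C I D (cmp C d s) W w" using has_ker[OF ds I D] by blast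
      have W: "W \<in> Ob C" and w: "w \<in> Hom C W I" and zw: "zero_mor C W D (cmp C (cmp C d s) w)" using kerD[OF kw] by blast+
      have xe: "cmp C x e \<in> Hom C a c" using e x ob I c by blast
      have se: "cmp C s e \<in> Hom C a P" using e s ob I P by blast
      have dxe: "cmp C dl (cmp C x e) \<in> Hom C a P" using xe dl ob c P by blast
      have 1: "cmp C s e = cmp C dl (cmp C x e)"
      proof (rule ex1_eq[OF PU[rule_format, OF ob(1) xe xe]])
        show "cmp C s e \<in> Hom C a P \<and> cmp C p1 (cmp C s e) = cmp C x e \<and> cmp C p2 (cmp C s e) = cmp C x e"
          using se assoc[OF e s p1 ob(1) I P c] assoc[OF e s p2 ob(1) I P c] s1 s2 exy by simp
        show "cmp C dl (cmp C x e) \<in> Hom C a P \<and> cmp C p1 (cmp C dl (cmp C x e)) = cmp C x e \<and> cmp C p2 (cmp C dl (cmp C x e)) = cmp C x e"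
          using dxe assoc[OF xe dl p1 ob(1) c P c] assoc[OF xe dl p2 ob(1) c P c] dl1 dl2 xe ob c by simp
      qed
      have "cmp C (cmp C d s) e = cmp C d (cmp C s e)" using assoc[OF e s d ob(1) I P D] by simp
      also have "\<dots> = cmp C (cmp C d dl) (cmp C x e)" using 1 assoc[OF xe dl d ob(1) c P D] by simp
      finally have 2: "zero_mor C a D (cmp C (cmp C d s) e)" using zero_comp_right[OF zd xe ob(1) c D] by simp
      obtain e' where e': "e' \<in> Hom C a W" and we: "cmp C w e' = e" using ker_fac[OF kw ob(1) e 2] by blast
      have sw: "cmp C s w \<in> Hom C W P" using s w W I P by blast
      have "zero_mor C W D (cmp C d (cmp C s w))" using zw assoc[OF w s d W I P D] by simp
      then obtain u where u: "u \<in> Hom C W c" and du: "cmp C dl u = cmp C s w" using ker_fac[OF kd W sw] by blast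
      have xw: "cmp C x w = u"
      proof -
        have "cmp C x w = cmp C (cmp C p1 s) w" using s1 by simp
        also have "\<dots> = cmp C p1 (cmp C s w)" using assoc[OF w s p1 W I P c] by simp
        also have "\<dots> = cmp C (cmp C p1 dl) u" using du assoc[OF u dl p1 W c P c] by simp
        also have "\<dots> = u" using dl1 u W c by simp
        finally show ?thesis .
      qed
      have yw: "cmp C y w = u"
      proof -
        have "cmp C y w = cmp C (cmp C p2 s) w" using s2 by simp
        also have "\<dots> = cmp C p2 (cmp C s w)" using assoc[OF w s p2 W I P c] by simp
        also have "\<dots> = cmp C (cmp C p2 dl) u" using du assoc[OF u dl p2 W c P c] by simp
        also have "\<dots> = u" using dl2 u W c by simp
        finally show ?thesis .
      qed
      have wmono: "mono C W I w" using kernel_mono[OF kw I D] .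
      have mw: "mono C W b (cmp C m w)" using mono_comp[OF wmono mmono W I ob(2)] .
      obtain c' h where c': "c' \<in> Ob C" and h: "h \<in> Hom C b c'" and kh: "is_kernel C b c' h W (cmp C m w)"
        using normal_mono[OF mw W ob(2)] by blast
      have mwh: "cmp C m w \<in> Hom C W b" using mono_hom[OF mw] .
      have zh: "zero_mor C W c' (cmp C h (cmp C m w))" using kerD[OF kh] by blast
      have "cmp C h f = cmp C h (cmp C (cmp C m w) e')" using me we assoc[OF e' w m ob(1) W I ob(2)] by simp
      also have "\<dots> = cmp C (cmp C h (cmp C m w)) e'" using assoc[OF e' mwh h ob(1) W ob(2) c'] .
      finally have 3: "zero_mor C a c' (cmp C h f)" using zero_comp_right[OF zh e' ob(1) W c'] by simp
      obtain h' where h': "h' \<in> Hom C Q c'" and hq: "cmp C h' q = h" using coker_fac[OF cq c' h 3] by blast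
      have "cmp C h m = cmp C h' (cmp C q m)" using hq assoc[OF m q h' I ob(2) Q c'] by simp
      hence 4: "zero_mor C I c' (cmp C h m)" using zero_comp_left[OF zm h' I Q c'] by simp
      obtain s' where s': "s' \<in> Hom C I W" and ms: "cmp C (cmp C m w) s' = m" using ker_fac[OF kh I m 4] by blast
      have ws: "cmp C w s' \<in> Hom C I I" using w s' W I by blast
      have "cmp C m (cmp C w s') = cmp C m (ide C I)" using ms assoc[OF s' w m I W I ob(2)] m I ob by simp
      hence ws1: "cmp C w s' = ide C I" using monoD[OF mmono I ws ide_hom[OF I]] by simp
      have "x = cmp C x (cmp C w s')" using ws1 x I c by simp
      also have "\<dots> = cmp C u s'" using assoc[OF s' w x I W I c] xw by simp
      also have "\<dots> = cmp C y (cmp C w s')" using assoc[OF s' w y I W I c] yw by simp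
      also have "\<dots> = y" using ws1 y I c by simp
      finally have "x = y" . }
    thus ?thesis unfolding epi_def using e by blast
  qed
  obtain c0 g where c0: "c0 \<in> Ob C" and g: "g \<in> Hom C c0 a" and ce: "is_cokernel C c0 a g I e"
    using normal_epi[OF eepi ob(1) I] by blast
  have zeg: "zero_mor C c0 I (cmp C e g)" using cokerD[OF ce] by blast
  have "cmp C f g = cmp C m (cmp C e g)" using me assoc[OF g e m c0 ob(1) I ob(2)] by simp
  hence "zero_mor C c0 b (cmp C f g)" using zero_comp_left[OF zeg m c0 I ob(2)] by simp
  hence zg: "zero_mor C c0 a g" using H[OF c0 g] by blast
  have "zero_mor C c0 a (cmp C (ide C a) g)" using zg g c0 ob by simp
  then obtain u where u: "u \<in> Hom C I a" and ue: "cmp C u e = ide C a"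
    using coker_fac[OF ce ob(1) ide_hom[OF ob(1)]] by blast
  have eu: "cmp C e u \<in> Hom C I I" using e u I ob by blast
  have "cmp C (cmp C e u) e = cmp C (ide C I) e" using assoc[OF e u e ob(1) I ob(1) I] ue e ob I by simp
  hence eu1: "cmp C e u = ide C I" using epiD[OF eepi I eu ide_hom[OF I]] by simp
  { fix x t1 t2 assume x: "x \<in> Ob C" and t1: "t1 \<in> Hom C x a" and t2: "t2 \<in> Hom C x a" and tt: "cmp C f t1 = cmp C f t2"
    have et1: "cmp C e t1 \<in> Hom C x I" and et2: "cmp C e t2 \<in> Hom C x I" using t1 t2 e x ob I by blast+
    have "cmp C m (cmp C e t1) = cmp C m (cmp C e t2)"
      using tt me assoc[OF t1 e m x ob(1) I ob(2)] assoc[OF t2 e m x ob(1) I ob(2)] by simp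
    hence eq: "cmp C e t1 = cmp C e t2" using monoD[OF mmono x et1 et2] by simp
    have "t1 = cmp C (cmp C u e) t1" using ue t1 x ob by simp
    also have "\<dots> = cmp C u (cmp C e t1)" using assoc[OF t1 e u x ob(1) I ob(1)] by simp
    also have "\<dots> = cmp C (cmp C u e) t2" using eq assoc[OF t2 e u x ob(1) I ob(1)] by simp
    also have "\<dots> = t2" using ue t2 x ob by simp
    finally have "t1 = t2" . }
  thus ?thesis unfolding mono_def using f by blast
qed

lemma mono_killers_iso:
  assumes m: "mono C a b m" and ob: "a \<in> Ob C" "b \<in> Ob C"
    and K: "\<And>c h. c \<in> Ob C \<Longrightarrow> h \<in> Hom C b c \<Longrightarrow> zero_mor C a c (cmp C h m) \<Longrightarrow> zero_mor C b c h"
  shows "iso_mor C a b m"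
proof -
  have mh: "m \<in> Hom C a b" using mono_hom[OF m] .
  obtain c h where c: "c \<in> Ob C" and h: "h \<in> Hom C b c" and kh: "is_kernel C b c h a m"
    using normal_mono[OF m ob] by blast
  have "zero_mor C a c (cmp C h m)" using kerD[OF kh] by blast
  hence "zero_mor C b c h" using K[OF c h] by blast
  hence "zero_mor C b c (cmp C h (ide C b))" using h ob c by simp
  then obtain u where u: "u \<in> Hom C b a" and mu: "cmp C m u = ide C b" using ker_fac[OF kh ob(2) ide_hom[OF ob(2)]] by blast
  have um: "cmp C u m \<in> Hom C a a" using u mh ob by blast
  have "cmp C m (cmp C u m) = cmp C m (ide C a)" using assoc[OF mh u mh ob(1,2,1,2)] mu mh ob by simp
  hence "cmp C u m = ide C a" using monoD[OF m ob(1) um ide_hom[OF ob(1)]] by simp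
  thus ?thesis unfolding iso_mor_def using mu mh u by blast
qed

end

section \<open>Equivalences\<close>

lemma nat_iso_faithful:
  assumes C: "category C" and F: "is_functor C D F" and G: "is_functor D C G"
    and phi: "nat_iso C C (fcomp G F) fid phi"
  shows "faithful C D F"
proof -
  interpret C: cat C using C by unfold_locales
  { fix a b f g assume a: "a \<in> Ob C" and b: "b \<in> Ob C" and f: "f \<in> Hom C a b" and g: "g \<in> Hom C a b" and eq: "fm F f = fm F g"
    have pa: "iso_mor C (fo G (fo F a)) a (phi a)" using ni_iso[OF phi a] by simp
    have GFa: "fo G (fo F a) \<in> Ob C" using fo_ob[OF G fo_ob[OF F a]] .
    have "cmp C (phi b) (fm G (fm F f)) = cmp C f (phi a)" using nt_nat[OF ni_nt[OF phi] f a b] by simp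
    moreover have "cmp C (phi b) (fm G (fm F g)) = cmp C g (phi a)" using nt_nat[OF ni_nt[OF phi] g a b] by simp
    ultimately have "cmp C f (phi a) = cmp C g (phi a)" using eq by simp
    hence "f = g" using C.iso_cancel_right[OF pa f g _ b GFa a] by blast }
  thus ?thesis unfolding faithful_def by blast
qed

lemma equivalence_props:
  assumes C: "category C" and D: "category D" and eq: "equivalence C D F"
  shows "full C D F" "faithful C D F" "ess_surj C D F"
proof -
  interpret C: cat C using C by unfold_locales
  interpret D: cat D using D by unfold_locales
  have F: "is_functor C D F" using eq unfolding equivalence_def by blast
  obtain G phi psi where G: "is_functor D C G" and phi: "nat_iso C C (fcomp G F) fid phi"
    and psi: "nat_iso D D (fcomp F G) fid psi"
    using eq unfolding equivalence_def nat_isomorphic_def by blast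
  show fF: "faithful C D F" using nat_iso_faithful[OF C F G phi] .
  have fG: "faithful D C G" using nat_iso_faithful[OF D G F psi] .
  show "ess_surj C D F" unfolding ess_surj_def iso_obj_def
  proof
    fix d assume d: "d \<in> Ob D"
    have "iso_mor D (fo F (fo G d)) d (psi d)" using ni_iso[OF psi d] by simp
    thus "\<exists>c\<in>Ob C. \<exists>f. iso_mor D (fo F c) d f" using fo_ob[OF G d] by blast
  qed
  { fix a b g assume a: "a \<in> Ob C" and b: "b \<in> Ob C" and g: "g \<in> Hom D (fo F a) (fo F b)"
    have Fa: "fo F a \<in> Ob D" "fo F b \<in> Ob D" using fo_ob[OF F] a b by auto
    have GFa: "fo G (fo F a) \<in> Ob C" "fo G (fo F b) \<in> Ob C" using fo_ob[OF G] Fa by auto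
    have pa: "iso_mor C (fo G (fo F a)) a (phi a)" using ni_iso[OF phi a] by simp
    have pb: "iso_mor C (fo G (fo F b)) b (phi b)" using ni_iso[OF phi b] by simp
    define pai where "pai = inv_mor C (fo G (fo F a)) a (phi a)"
    note pai = iso_inv[OF pa, folded pai_def]
    have Gg: "fm G g \<in> Hom C (fo G (fo F a)) (fo G (fo F b))" using fm_hom[OF G g Fa] .
    define f where "f = cmp C (phi b) (cmp C (fm G g) pai)"
    have f: "f \<in> Hom C a b" unfolding f_def using C.comp_hom[OF C.comp_hom[OF pai(1) Gg a GFa(1) GFa(2)] iso_hom[OF pb] a GFa(2) b] .
    have "cmp C f (phi a) = cmp C (phi b) (cmp C (cmp C (fm G g) pai) (phi a))"
      unfolding f_def using C.assoc[OF iso_hom[OF pa] C.comp_hom[OF pai(1) Gg a GFa(1) GFa(2)] iso_hom[OF pb] GFa(1) a GFa(2) b] by simp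
    also have "\<dots> = cmp C (phi b) (fm G g)"
      using C.assoc[OF iso_hom[OF pa] pai(1) Gg GFa(1) a GFa(1) GFa(2)] pai(2) Gg GFa by simp
    finally have 1: "cmp C f (phi a) = cmp C (phi b) (fm G g)" .
    have "cmp C (phi b) (fm G (fm F f)) = cmp C f (phi a)" using nt_nat[OF ni_nt[OF phi] f a b] by simp
    hence "cmp C (phi b) (fm G (fm F f)) = cmp C (phi b) (fm G g)" using 1 by simp
    hence "fm G (fm F f) = fm G g" using C.iso_cancel_left[OF pb fm_hom[OF G fm_hom[OF F f a b] Fa] Gg _ GFa(1) GFa(2) b] by blast
    hence "fm F f = g" using fG fm_hom[OF F f a b] g Fa unfolding faithful_def by blast
    hence "\<exists>f\<in>Hom C a b. fm F f = g" using f by blast }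
  thus "full C D F" unfolding full_def by blast
qed

lemma fun_zero_mor:
  assumes F: "is_functor C D F" and Z: "\<And>z. zero_object C z \<Longrightarrow> zero_object D (fo F z)"
    and C: "category C" and D: "category D"
    and f: "zero_mor C a b f" and ob: "a \<in> Ob C" "b \<in> Ob C"
  shows "zero_mor D (fo F a) (fo F b) (fm F f)"
proof -
  interpret C: cat C using C by unfold_locales
  interpret D: cat D using D by unfold_locales
  obtain z g h where z: "zero_object C z" "g \<in> Hom C a z" "h \<in> Hom C z b" "f = cmp C h g"
    using f unfolding zero_mor_def by blast
  have zo: "z \<in> Ob C" using C.zero_ob[OF z(1)] .
  have "fm F f = cmp D (fm F h) (fm F g)" using fm_comp[OF F z(2) z(3) ob(1) zo ob(2)] z(4) by simp
  thus ?thesis using D.zero_morI[OF Z[OF z(1)] fm_hom[OF F z(2) ob(1) zo] fm_hom[OF F z(3) zo ob(2)]] fo_ob[OF F] ob by simp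
qed

locale ffe = C: cat C + D: cat D for C :: "('o1, 'm1) cat" and D :: "('o2, 'm2) cat" +
  fixes F :: "('o1, 'm1, 'o2, 'm2) ftr"
  assumes F: "is_functor C D F" and full: "full C D F" and faithful: "faithful C D F" and es: "ess_surj C D F"
begin

lemma fullD: "a \<in> Ob C \<Longrightarrow> b \<in> Ob C \<Longrightarrow> g \<in> Hom D (fo F a) (fo F b) \<Longrightarrow> \<exists>f\<in>Hom C a b. fm F f = g"
  using full unfolding full_def by blast
lemma faithfulD: "a \<in> Ob C \<Longrightarrow> b \<in> Ob C \<Longrightarrow> f \<in> Hom C a b \<Longrightarrow> g \<in> Hom C a b \<Longrightarrow> fm F f = fm F g \<Longrightarrow> f = g"
  using faithful unfolding faithful_def by blast
lemma esD: assumes "d \<in> Ob D" obtains c i where "c \<in> Ob C" "iso_mor D (fo F c) d i"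
  using es assms unfolding ess_surj_def iso_obj_def by blast

lemma Fob: "a \<in> Ob C \<Longrightarrow> fo F a \<in> Ob D" using fo_ob[OF F] .

lemma F_epi:
  assumes e: "epi C a b c" and ob: "a \<in> Ob C" "b \<in> Ob C"
  shows "epi D (fo F a) (fo F b) (fm F c)"
proof -
  have c: "c \<in> Hom C a b" using C.epi_hom[OF e] .
  have Fa: "fo F a \<in> Ob D" "fo F b \<in> Ob D" using Fob ob by auto
  { fix T g h assume T: "T \<in> Ob D" and g: "g \<in> Hom D (fo F b) T" and h: "h \<in> Hom D (fo F b) T"
      and eq: "cmp D g (fm F c) = cmp D h (fm F c)"
    obtain T' i where T': "T' \<in> Ob C" and i: "iso_mor D (fo F T') T i" using esD[OF T] by blast
    define j where "j = inv_mor D (fo F T') T i"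
    note j = iso_inv[OF i, folded j_def]
    have FT: "fo F T' \<in> Ob D" using Fob T' .
    have jg: "cmp D j g \<in> Hom D (fo F b) (fo F T')" using D.comp_hom[OF g j(1) Fa(2) T FT] .
    have jh: "cmp D j h \<in> Hom D (fo F b) (fo F T')" using D.comp_hom[OF h j(1) Fa(2) T FT] .
    obtain g' where g': "g' \<in> Hom C b T'" and Fg: "fm F g' = cmp D j g" using fullD[OF ob(2) T' jg] by blast
    obtain h' where h': "h' \<in> Hom C b T'" and Fh: "fm F h' = cmp D j h" using fullD[OF ob(2) T' jh] by blast
    have "fm F (cmp C g' c) = cmp D (cmp D j g) (fm F c)" using fm_comp[OF F c g' ob T'] Fg by simp
    also have "\<dots> = cmp D j (cmp D g (fm F c))" using D.assoc[OF fm_hom[OF F c ob] g j(1) Fa T FT] by simp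
    also have "\<dots> = cmp D j (cmp D h (fm F c))" using eq by simp
    also have "\<dots> = cmp D (cmp D j h) (fm F c)" using D.assoc[OF fm_hom[OF F c ob] h j(1) Fa T FT] .
    also have "\<dots> = fm F (cmp C h' c)" using fm_comp[OF F c h' ob T'] Fh by simp
    finally have "cmp C g' c = cmp C h' c"
      using faithfulD[OF ob(1) T' C.comp_hom[OF c g' ob T'] C.comp_hom[OF c h' ob T']] by blast
    hence "g' = h'" using C.epiD[OF e T' g' h'] by blast
    hence "cmp D j g = cmp D j h" using Fg Fh by simp
    hence "g = h" using D.iso_cancel_left[OF iso_inv_iso[OF i, folded j_def] g h _ Fa(2) T FT] by blast }
  thus ?thesis unfolding epi_def using fm_hom[OF F c ob] by blast
qed

lemma F_zero:
  assumes z: "zero_object C z"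
  shows "zero_object D (fo F z)"
proof -
  have zo: "z \<in> Ob C" using C.zero_ob[OF z] .
  have Fz: "fo F z \<in> Ob D" using Fob zo .
  { fix b assume b: "b \<in> Ob D"
    obtain b' i where b': "b' \<in> Ob C" and i: "iso_mor D (fo F b') b i" using esD[OF b] by blast
    define j where "j = inv_mor D (fo F b') b i"
    note j = iso_inv[OF i, folded j_def]
    have Fb: "fo F b' \<in> Ob D" using Fob b' .
    obtain k where k: "k \<in> Hom C z b'" using C.zero_from_ex[OF z b'] by blast
    obtain k' where k': "k' \<in> Hom C b' z" using C.zero_to_ex[OF z b'] by blast
    have e1: "cmp D i (fm F k) \<in> Hom D (fo F z) b" using D.comp_hom[OF fm_hom[OF F k zo b'] iso_hom[OF i] Fz Fb b] .
    have u1: "f1 = f2" if f1: "f1 \<in> Hom D (fo F z) b" and f2: "f2 \<in> Hom D (fo F z) b" for f1 f2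
    proof -
      have jf1: "cmp D j f1 \<in> Hom D (fo F z) (fo F b')" using D.comp_hom[OF f1 j(1) Fz b Fb] .
      have jf2: "cmp D j f2 \<in> Hom D (fo F z) (fo F b')" using D.comp_hom[OF f2 j(1) Fz b Fb] .
      obtain g1 where g1: "g1 \<in> Hom C z b'" "fm F g1 = cmp D j f1" using fullD[OF zo b' jf1] by blast
      obtain g2 where g2: "g2 \<in> Hom C z b'" "fm F g2 = cmp D j f2" using fullD[OF zo b' jf2] by blast
      have "g1 = g2" using C.zero_from_uniq[OF z g1(1) g2(1) b'] .
      hence "cmp D j f1 = cmp D j f2" using g1 g2 by simp
      thus ?thesis using D.iso_cancel_left[OF iso_inv_iso[OF i, folded j_def] f1 f2 _ Fz b Fb] by blast
    qed
    have e2: "cmp D (fm F k') j \<in> Hom D b (fo F z)" using D.comp_hom[OF j(1) fm_hom[OF F k' b' zo] b Fb Fz] .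
    have u2: "f1 = f2" if f1: "f1 \<in> Hom D b (fo F z)" and f2: "f2 \<in> Hom D b (fo F z)" for f1 f2
    proof -
      have jf1: "cmp D f1 i \<in> Hom D (fo F b') (fo F z)" using D.comp_hom[OF iso_hom[OF i] f1 Fb b Fz] .
      have jf2: "cmp D f2 i \<in> Hom D (fo F b') (fo F z)" using D.comp_hom[OF iso_hom[OF i] f2 Fb b Fz] .
      obtain g1 where g1: "g1 \<in> Hom C b' z" "fm F g1 = cmp D f1 i" using fullD[OF b' zo jf1] by blast
      obtain g2 where g2: "g2 \<in> Hom C b' z" "fm F g2 = cmp D f2 i" using fullD[OF b' zo jf2] by blast
      have "g1 = g2" using C.zero_to_uniq[OF z g1(1) g2(1) b'] .
      hence "cmp D f1 i = cmp D f2 i" using g1 g2 by simp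
      thus ?thesis using D.iso_cancel_right[OF i f1 f2 _ Fz Fb b] by blast
    qed
    have "\<exists>!f. f \<in> Hom D (fo F z) b"
    proof (rule ex1I)
      show "cmp D i (fm F k) \<in> Hom D (fo F z) b" by (rule e1)
    next
      fix f assume "f \<in> Hom D (fo F z) b" thus "f = cmp D i (fm F k)" by (rule u1[OF _ e1])
    qed
    moreover have "\<exists>!f. f \<in> Hom D b (fo F z)"
    proof (rule ex1I)
      show "cmp D (fm F k') j \<in> Hom D b (fo F z)" by (rule e2)
    next
      fix f assume "f \<in> Hom D b (fo F z)" thus "f = cmp D (fm F k') j" by (rule u2[OF _ e2])
    qed
    ultimately have "(\<exists>!f. f \<in> Hom D (fo F z) b) \<and> (\<exists>!f. f \<in> Hom D b (fo F z))" by (rule conjI) }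
  thus ?thesis unfolding zero_object_def using Fz by (intro conjI ballI) auto
qed

lemma F_reflect_iso:
  assumes a: "a \<in> Ob C" and b: "b \<in> Ob C" and i: "iso_obj D (fo F a) (fo F b)"
  shows "iso_obj C a b"
proof -
  obtain u where u: "iso_mor D (fo F a) (fo F b) u" using i unfolding iso_obj_def by blast
  define v where "v = inv_mor D (fo F a) (fo F b) u"
  note v = iso_inv[OF u, folded v_def]
  have Fa: "fo F a \<in> Ob D" "fo F b \<in> Ob D" using Fob a b by auto
  obtain h where h: "h \<in> Hom C a b" "fm F h = u" using fullD[OF a b iso_hom[OF u]] by blast
  obtain h' where h': "h' \<in> Hom C b a" "fm F h' = v" using fullD[OF b a v(1)] by blast
  have "fm F (cmp C h' h) = fm F (ide C a)" using fm_comp[OF F h(1) h'(1) a b a] h h' v(2) fm_ide[OF F a] by simp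
  hence 1: "cmp C h' h = ide C a" using faithfulD[OF a a C.comp_hom[OF h(1) h'(1) a b a] C.ide_hom[OF a]] by blast
  have "fm F (cmp C h h') = fm F (ide C b)" using fm_comp[OF F h'(1) h(1) b a b] h h' v(3) fm_ide[OF F b] by simp
  hence 2: "cmp C h h' = ide C b" using faithfulD[OF b b C.comp_hom[OF h'(1) h(1) b a b] C.ide_hom[OF b]] by blast
  show ?thesis unfolding iso_obj_def iso_mor_def using 1 2 h h' by blast
qed

end



lemma abelian_cat: "abelian C \<Longrightarrow> category C" unfolding abelian_def by (rule conjunct1)

locale setting =
  A: abcat A + A2: abcat A2 + B: abcat B + B2: abcat B2 +
  adjA: adj A A2 jA rA etaA epsA +
  adjLA: adj A2 A lA jA eta1A eps1A +
  adjB: adj B B2 jB rB etaB epsB +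
  adjLB: adj B2 B lB jB eta1B eps1B +
  Fe: ffe A B F
  for A :: "('a, 'b) cat" and A2 :: "('a2, 'b2) cat" and B :: "('c, 'd) cat" and B2 :: "('c2, 'd2) cat"
    and jA rA etaA epsA lA eta1A eps1A jB rB etaB epsB lB eta1B eps1B F +
  fixes A1 :: "('a1, 'b1) cat" and B1 :: "('c1, 'd1) cat"
    and iA :: "('a1, 'b1, 'a, 'b) ftr" and iB :: "('c1, 'd1, 'c, 'd) ftr"
    and F1 :: "('a1, 'b1, 'c1, 'd1) ftr" and F2 :: "('a2, 'b2, 'c2, 'd2) ftr"
    and theta :: "'a \<Rightarrow> 'd2" and kappa :: "'a1 \<Rightarrow> 'd"
  assumes epsA_iso: "\<And>a. a \<in> Ob A2 \<Longrightarrow> iso_mor A2 (fo jA (fo rA a)) a (epsA a)"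
    and epsB_iso: "\<And>a. a \<in> Ob B2 \<Longrightarrow> iso_mor B2 (fo jB (fo rB a)) a (epsB a)"
    and kerA: "\<And>x. x \<in> Ob A \<Longrightarrow> zero_object A2 (fo jA x) \<longleftrightarrow> (\<exists>y\<in>Ob A1. iso_obj A (fo iA y) x)"
    and kerB: "\<And>x. x \<in> Ob B \<Longrightarrow> zero_object B2 (fo jB x) \<longleftrightarrow> (\<exists>y\<in>Ob B1. iso_obj B (fo iB y) x)"
    and iA: "is_functor A1 A iA" and iB: "is_functor B1 B iB"
    and F1: "is_functor A1 B1 F1" and F1es: "ess_surj A1 B1 F1"
    and F2: "is_functor A2 B2 F2"
    and theta: "nat_iso A B2 (fcomp jB F) (fcomp F2 jA) theta"
    and kappa: "nat_iso A1 B (fcomp iB F1) (fcomp F iA) kappa"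
begin

lemma theta_hom: "X \<in> Ob A \<Longrightarrow> iso_mor B2 (fo jB (fo F X)) (fo F2 (fo jA X)) (theta X)"
  using ni_iso[OF theta] by simp
lemma theta_nat: "h \<in> Hom A X Y \<Longrightarrow> X \<in> Ob A \<Longrightarrow> Y \<in> Ob A \<Longrightarrow>
   cmp B2 (theta Y) (fm jB (fm F h)) = cmp B2 (fm F2 (fm jA h)) (theta X)"
  using nt_nat[OF ni_nt[OF theta]] by simp

lemma JB_zero: assumes z: "zero_object B z" shows "zero_object B2 (fo jB z)"
proof -
  have zo: "z \<in> Ob B" using B.zero_ob[OF z] .
  have "\<forall>b\<in>Ob B. \<exists>!f. f \<in> Hom B b z"
  proof
    fix b assume b: "b \<in> Ob B"
    obtain f where f: "f \<in> Hom B b z" using B.zero_to_ex[OF z b] by blast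
    show "\<exists>!f. f \<in> Hom B b z" by (rule ex1I[of _ f]) (use f B.zero_to_uniq[OF z _ _ b] in auto)
  qed
  from adjLB.R_terminal[OF zo this] obtain z2 where "zero_object B2 z2" using B2.has_zero by blast
  thus ?thesis using B2.terminal_zero adjLB.R_terminal[OF zo] adjLB.Rob[OF zo] \<open>\<forall>b\<in>Ob B. \<exists>!f. f \<in> Hom B b z\<close> by blast
qed

lemma JA_zero: assumes z: "zero_object A z" shows "zero_object A2 (fo jA z)"
proof -
  have zo: "z \<in> Ob A" using A.zero_ob[OF z] .
  have t: "\<forall>b\<in>Ob A. \<exists>!f. f \<in> Hom A b z"
  proof
    fix b assume b: "b \<in> Ob A"
    obtain f where f: "f \<in> Hom A b z" using A.zero_to_ex[OF z b] by blast
    show "\<exists>!f. f \<in> Hom A b z" by (rule ex1I[of _ f]) (use f A.zero_to_uniq[OF z _ _ b] in auto)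
  qed
  obtain z2 where "zero_object A2 z2" using A2.has_zero by blast
  thus ?thesis using A2.terminal_zero adjLA.R_terminal[OF zo t] adjLA.Rob[OF zo] by blast
qed

lemma RA_zero: assumes z: "zero_object A2 z" shows "zero_object A (fo rA z)"
proof -
  have zo: "z \<in> Ob A2" using A2.zero_ob[OF z] .
  have t: "\<forall>b\<in>Ob A2. \<exists>!f. f \<in> Hom A2 b z"
  proof
    fix b assume b: "b \<in> Ob A2"
    obtain f where f: "f \<in> Hom A2 b z" using A2.zero_to_ex[OF z b] by blast
    show "\<exists>!f. f \<in> Hom A2 b z" by (rule ex1I[of _ f]) (use f A2.zero_to_uniq[OF z _ _ b] in auto)
  qed
  obtain z2 where "zero_object A z2" using A.has_zero by blast
  thus ?thesis using A.terminal_zero adjA.R_terminal[OF zo t] adjA.Rob[OF zo] by blast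
qed

lemma JB_zero_mor: "zero_mor B a b f \<Longrightarrow> a \<in> Ob B \<Longrightarrow> b \<in> Ob B \<Longrightarrow> zero_mor B2 (fo jB a) (fo jB b) (fm jB f)"
  using fun_zero_mor[OF adjB.L JB_zero B.category B2.category] by blast
lemma RA_zero_mor: "zero_mor A2 a b f \<Longrightarrow> a \<in> Ob A2 \<Longrightarrow> b \<in> Ob A2 \<Longrightarrow> zero_mor A (fo rA a) (fo rA b) (fm rA f)"
  using fun_zero_mor[OF adjA.R RA_zero A2.category A.category] by blast
lemma F_zero_mor: "zero_mor A a b f \<Longrightarrow> a \<in> Ob A \<Longrightarrow> b \<in> Ob A \<Longrightarrow> zero_mor B (fo F a) (fo F b) (fm F f)"
  using fun_zero_mor[OF Fe.F Fe.F_zero A.category B.category] by blast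

lemma ker_to_A1:
  assumes X: "X \<in> Ob B" and z: "zero_object B2 (fo jB X)"
  shows "\<exists>a\<in>Ob A1. iso_obj B (fo F (fo iA a)) X"
proof -
  obtain y where y: "y \<in> Ob B1" and iy: "iso_obj B (fo iB y) X" using kerB[OF X] z by blast
  obtain a where a: "a \<in> Ob A1" and ia: "iso_obj B1 (fo F1 a) y" using F1es y unfolding ess_surj_def by blast
  have F1a: "fo F1 a \<in> Ob B1" using fo_ob[OF F1 a] .
  have 1: "iso_obj B (fo iB (fo F1 a)) (fo iB y)" using fo_iso_obj[OF iB ia F1a y] .
  have 2: "iso_mor B (fo iB (fo F1 a)) (fo F (fo iA a)) (kappa a)" using ni_iso[OF kappa a] by simp
  have o1: "fo iB (fo F1 a) \<in> Ob B" "fo iB y \<in> Ob B" "fo F (fo iA a) \<in> Ob B"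
    using fo_ob[OF iB F1a] fo_ob[OF iB y] Fe.Fob[OF fo_ob[OF iA a]] by auto
  have "iso_obj B (fo F (fo iA a)) (fo iB (fo F1 a))" using B.iso_obj_sym 2 unfolding iso_obj_def by blast
  hence "iso_obj B (fo F (fo iA a)) (fo iB y)" using B.iso_obj_trans[OF _ 1 o1(3) o1(1) o1(2)] by blast
  hence "iso_obj B (fo F (fo iA a)) X" using B.iso_obj_trans[OF _ iy o1(3) o1(2) X] by blast
  thus ?thesis using a by blast
qed

lemma JiA_zero: "a \<in> Ob A1 \<Longrightarrow> zero_object A2 (fo jA (fo iA a))"
  using kerA[OF fo_ob[OF iA]] A.iso_obj_refl[OF fo_ob[OF iA]] by blast

lemma crux:
  assumes y: "y \<in> Ob A2"
  shows "iso_mor B (fo F (fo rA y)) (fo rB (fo jB (fo F (fo rA y)))) (etaB (fo F (fo rA y)))"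
proof -
  define Z where "Z = fo rA y"
  have Z: "Z \<in> Ob A" unfolding Z_def using adjA.Rob[OF y] .
  have JZ: "fo jA Z \<in> Ob A2" using adjA.Lob[OF Z] .
  have RJZ: "fo rA (fo jA Z) \<in> Ob A" using adjA.Rob[OF JZ] .
  have etaZ: "iso_mor A Z (fo rA (fo jA Z)) (etaA Z)" unfolding Z_def using adjA.eta_R_iso[OF y epsA_iso[OF y]] .
  define FZ where "FZ = fo F Z"
  have FZ: "FZ \<in> Ob B" unfolding FZ_def using Fe.Fob[OF Z] .
  have JFZ: "fo jB FZ \<in> Ob B2" using adjB.Lob[OF FZ] .
  define M where "M = fo rB (fo jB FZ)"
  have M: "M \<in> Ob B" unfolding M_def using adjB.Rob[OF JFZ] .
  have JM: "fo jB M \<in> Ob B2" using adjB.Lob[OF M] .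
  define eta where "eta = etaB FZ"
  have eta: "eta \<in> Hom B FZ M" unfolding eta_def M_def using adjB.eta_hom[OF FZ] .
  have Jeta: "fm jB eta \<in> Hom B2 (fo jB FZ) (fo jB M)" using adjB.Lhom[OF eta FZ M] .
  have Jeta_iso: "iso_mor B2 (fo jB FZ) (fo jB M) (fm jB eta)"
  proof -
    have e: "iso_mor B2 (fo jB M) (fo jB FZ) (epsB (fo jB FZ))" unfolding M_def using epsB_iso[OF JFZ] .
    have "cmp B2 (epsB (fo jB FZ)) (fm jB eta) = ide B2 (fo jB FZ)" unfolding eta_def using adjB.tri1[OF FZ] .
    hence "fm jB eta = inv_mor B2 (fo jB M) (fo jB FZ) (epsB (fo jB FZ))"
      using B2.inv_unique2[OF e Jeta _ JM JFZ] by blast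
    thus ?thesis using iso_inv_iso[OF e] by simp
  qed
  define Ji where "Ji = inv_mor B2 (fo jB FZ) (fo jB M) (fm jB eta)"
  note Ji = iso_inv[OF Jeta_iso, folded Ji_def]
  have homZ_unique: "k1 = k2" if K: "K \<in> Ob B" and zK: "zero_object B2 (fo jB K)"
      and k1: "k1 \<in> Hom B K FZ" and k2: "k2 \<in> Hom B K FZ" for K k1 k2
  proof -
    obtain a where a: "a \<in> Ob A1" and ia: "iso_obj B (fo F (fo iA a)) K" using ker_to_A1[OF K zK] by blast
    obtain be where be: "iso_mor B (fo F (fo iA a)) K be" using ia unfolding iso_obj_def by blast
    have X0: "fo iA a \<in> Ob A" using fo_ob[OF iA a] .
    have FX0: "fo F (fo iA a) \<in> Ob B" using Fe.Fob[OF X0] .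
    have b1: "cmp B k1 be \<in> Hom B (fo F (fo iA a)) (fo F Z)" using B.comp_hom[OF iso_hom[OF be] k1 FX0 K FZ] unfolding FZ_def .
    have b2: "cmp B k2 be \<in> Hom B (fo F (fo iA a)) (fo F Z)" using B.comp_hom[OF iso_hom[OF be] k2 FX0 K FZ] unfolding FZ_def .
    obtain h1 where h1: "h1 \<in> Hom A (fo iA a) Z" "fm F h1 = cmp B k1 be" using Fe.fullD[OF X0 Z b1] by blast
    obtain h2 where h2: "h2 \<in> Hom A (fo iA a) Z" "fm F h2 = cmp B k2 be" using Fe.fullD[OF X0 Z b2] by blast
    have "fm jA h1 = fm jA h2"
      using A2.zero_from_uniq[OF JiA_zero[OF a] adjA.Lhom[OF h1(1) X0 Z] adjA.Lhom[OF h2(1) X0 Z] JZ] .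
    hence "h1 = h2" using adjA.determined[OF Z etaZ X0 h1(1) h2(1)] by blast
    hence "cmp B k1 be = cmp B k2 be" using h1 h2 by simp
    thus ?thesis using B.iso_cancel_right[OF be k1 k2 _ FZ FX0 K] by blast
  qed
  have eta_mono: "mono B FZ M eta"
  proof (rule B.kerzero_mono[OF eta FZ M])
    fix x t assume x: "x \<in> Ob B" and t: "t \<in> Hom B x FZ" and zt: "zero_mor B x M (cmp B eta t)"
    obtain K k where kk: "is_kernel B FZ M eta K k" using B.has_ker[OF eta FZ M] by blast
    have K: "K \<in> Ob B" and k: "k \<in> Hom B K FZ" and zk: "zero_mor B K M (cmp B eta k)" using B.kerD[OF kk] by blast+
    have JK: "fo jB K \<in> Ob B2" using adjB.Lob[OF K] .
    have Jk: "fm jB k \<in> Hom B2 (fo jB K) (fo jB FZ)" using adjB.Lhom[OF k K FZ] .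
    have Jkmono: "mono B2 (fo jB K) (fo jB FZ) (fm jB k)" using adjLB.R_mono[OF B.kernel_mono[OF kk FZ M] K FZ] .
    have "zero_mor B2 (fo jB K) (fo jB M) (fm jB (cmp B eta k))" using JB_zero_mor[OF zk K M] .
    hence z1: "zero_mor B2 (fo jB K) (fo jB M) (cmp B2 (fm jB eta) (fm jB k))" using adjB.Lcomp[OF k eta K FZ M] by simp
    have "cmp B2 Ji (cmp B2 (fm jB eta) (fm jB k)) = cmp B2 (cmp B2 Ji (fm jB eta)) (fm jB k)"
      using B2.assoc[OF Jk Jeta Ji(1) JK JFZ JM JFZ] .
    also have "\<dots> = fm jB k" using Ji(2) Jk JK JFZ by simp
    finally have "zero_mor B2 (fo jB K) (fo jB FZ) (fm jB k)" using B2.zero_comp_left[OF z1 Ji(1) JK JM JFZ] by simp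
    hence zJK: "zero_object B2 (fo jB K)" using B2.mono_zero_obj[OF Jkmono _ JK JFZ] by blast
    obtain z0 where z0: "zero_object B z0" using B.has_zero by blast
    obtain k0 where k0: "zero_mor B K FZ k0" using B.zero_mor_ex[OF z0 K FZ] by blast
    have "k = k0" using homZ_unique[OF K zJK k B.zero_mor_hom[OF k0]] .
    hence zk: "zero_mor B K FZ k" using k0 by simp
    obtain u where u: "u \<in> Hom B x K" and ku: "cmp B k u = t" using B.ker_fac[OF kk x t zt] by blast
    show "zero_mor B x FZ t" using B.zero_comp_right[OF zk u x K FZ] ku by simp
  qed
  obtain E al where E: "E \<in> Ob A" and al: "iso_mor B (fo F E) M al" using Fe.esD[OF M] by blast
  have FE: "fo F E \<in> Ob B" using Fe.Fob[OF E] .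
  have JFE: "fo jB (fo F E) \<in> Ob B2" using adjB.Lob[OF FE] .
  define ai where "ai = inv_mor B (fo F E) M al"
  note ai = iso_inv[OF al, folded ai_def]
  have aie: "cmp B ai eta \<in> Hom B (fo F Z) (fo F E)" using B.comp_hom[OF eta ai(1) FZ M FE] unfolding FZ_def .
  obtain et where et: "et \<in> Hom A Z E" and Fet: "fm F et = cmp B ai eta" using Fe.fullD[OF Z E aie] by blast
  have Fet_hom: "fm F et \<in> Hom B FZ (fo F E)" unfolding FZ_def using fm_hom[OF Fe.F et Z E] .
  have et_mono: "mono A Z E et"
  proof -
    { fix x u v assume x: "x \<in> Ob A" and u: "u \<in> Hom A x Z" and v: "v \<in> Hom A x Z" and uv: "cmp A et u = cmp A et v"
      have Fx: "fo F x \<in> Ob B" using Fe.Fob[OF x] .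
      have Fu: "fm F u \<in> Hom B (fo F x) FZ" and Fv: "fm F v \<in> Hom B (fo F x) FZ" unfolding FZ_def using fm_hom[OF Fe.F u x Z] fm_hom[OF Fe.F v x Z] by auto
      have etu: "cmp B eta (fm F u) \<in> Hom B (fo F x) M" using B.comp_hom[OF Fu eta Fx FZ M] .
      have etv: "cmp B eta (fm F v) \<in> Hom B (fo F x) M" using B.comp_hom[OF Fv eta Fx FZ M] .
      have "fm F (cmp A et u) = fm F (cmp A et v)" using uv by simp
      hence "cmp B (fm F et) (fm F u) = cmp B (fm F et) (fm F v)" using fm_comp[OF Fe.F u et x Z E] fm_comp[OF Fe.F v et x Z E] by simp
      hence "cmp B ai (cmp B eta (fm F u)) = cmp B ai (cmp B eta (fm F v))"
        using Fet B.assoc[OF Fu eta ai(1) Fx FZ M FE] B.assoc[OF Fv eta ai(1) Fx FZ M FE] by simp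
      hence "cmp B eta (fm F u) = cmp B eta (fm F v)" using B.iso_cancel_left[OF iso_inv_iso[OF al, folded ai_def] etu etv _ Fx M FE] by blast
      hence "fm F u = fm F v" using B.monoD[OF eta_mono Fx Fu Fv] by blast
      hence "u = v" using Fe.faithfulD[OF x Z u v] by blast }
    thus ?thesis unfolding mono_def using et by blast
  qed
  obtain C' c' where cc: "is_cokernel A Z E et C' c'" using A.has_coker[OF et Z E] by blast
  have C': "C' \<in> Ob A" and c': "c' \<in> Hom A E C'" and zc: "zero_mor A Z C' (cmp A c' et)" using A.cokerD[OF cc] by blast+
  have FC': "fo F C' \<in> Ob B" using Fe.Fob[OF C'] .
  have JFC': "fo jB (fo F C') \<in> Ob B2" using adjB.Lob[OF FC'] .
  have JC'z: "zero_object A2 (fo jA C')"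
  proof -
    have Fc'epi: "epi B (fo F E) (fo F C') (fm F c')" using Fe.F_epi[OF A.cokernel_epi[OF cc Z E] E C'] .
    have JFc'epi: "epi B2 (fo jB (fo F E)) (fo jB (fo F C')) (fm jB (fm F c'))" using adjB.L_epi[OF Fc'epi FE FC'] .
    have Fc': "fm F c' \<in> Hom B (fo F E) (fo F C')" using fm_hom[OF Fe.F c' E C'] .
    have JFc': "fm jB (fm F c') \<in> Hom B2 (fo jB (fo F E)) (fo jB (fo F C'))" using adjB.Lhom[OF Fc' FE FC'] .
    have JFet_iso: "iso_mor B2 (fo jB FZ) (fo jB (fo F E)) (fm jB (fm F et))"
    proof -
      have "fm jB (fm F et) = cmp B2 (fm jB ai) (fm jB eta)" using Fet adjB.Lcomp[OF eta ai(1) FZ M FE] by simp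
      moreover have "iso_mor B2 (fo jB M) (fo jB (fo F E)) (fm jB ai)" using fm_iso[OF adjB.L iso_inv_iso[OF al, folded ai_def] M FE] .
      ultimately show ?thesis using B2.iso_comp[OF Jeta_iso _ JFZ JM JFE] by simp
    qed
    define Ki where "Ki = inv_mor B2 (fo jB FZ) (fo jB (fo F E)) (fm jB (fm F et))"
    note Ki = iso_inv[OF JFet_iso, folded Ki_def]
    have JFet: "fm jB (fm F et) \<in> Hom B2 (fo jB FZ) (fo jB (fo F E))" using iso_hom[OF JFet_iso] .
    have "zero_mor B (fo F Z) (fo F C') (fm F (cmp A c' et))" using F_zero_mor[OF zc Z C'] .
    hence "zero_mor B FZ (fo F C') (cmp B (fm F c') (fm F et))" unfolding FZ_def using fm_comp[OF Fe.F et c' Z E C'] by simp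
    hence "zero_mor B2 (fo jB FZ) (fo jB (fo F C')) (fm jB (cmp B (fm F c') (fm F et)))" using JB_zero_mor FZ FC' by blast
    hence z2: "zero_mor B2 (fo jB FZ) (fo jB (fo F C')) (cmp B2 (fm jB (fm F c')) (fm jB (fm F et)))"
      using adjB.Lcomp[OF Fet_hom Fc' FZ FE FC'] by simp
    have "cmp B2 (cmp B2 (fm jB (fm F c')) (fm jB (fm F et))) Ki = cmp B2 (fm jB (fm F c')) (cmp B2 (fm jB (fm F et)) Ki)"
      using B2.assoc[OF Ki(1) JFet JFc' JFE JFZ JFE JFC'] by simp
    also have "\<dots> = fm jB (fm F c')" using Ki(3) JFc' JFE JFC' by simp
    finally have "zero_mor B2 (fo jB (fo F E)) (fo jB (fo F C')) (fm jB (fm F c'))"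
      using B2.zero_comp_right[OF z2 Ki(1) JFE JFZ JFC'] by simp
    hence zz: "zero_object B2 (fo jB (fo F C'))" using B2.epi_zero_obj[OF JFc'epi _ JFC' JFE] by blast
    obtain a where a: "a \<in> Ob A1" and ia: "iso_obj B (fo F (fo iA a)) (fo F C')" using ker_to_A1[OF FC' zz] by blast
    have X0: "fo iA a \<in> Ob A" using fo_ob[OF iA a] .
    have "iso_obj A (fo iA a) C'" using Fe.F_reflect_iso[OF X0 C' ia] .
    hence "iso_obj A2 (fo jA (fo iA a)) (fo jA C')" using fo_iso_obj[OF adjA.L _ X0 C'] by blast
    hence "iso_obj A2 (fo jA C') (fo jA (fo iA a))" using A2.iso_obj_sym by blast
    thus ?thesis using A2.iso_obj_zero[OF JiA_zero[OF a] _ adjA.Lob[OF C']] by blast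
  qed
  have JE: "fo jA E \<in> Ob A2" using adjA.Lob[OF E] .
  have JC': "fo jA C' \<in> Ob A2" using adjA.Lob[OF C'] .
  have Jet: "fm jA et \<in> Hom A2 (fo jA Z) (fo jA E)" using adjA.Lhom[OF et Z E] .
  have Jet_iso: "iso_mor A2 (fo jA Z) (fo jA E) (fm jA et)"
  proof (rule A2.mono_killers_iso[OF adjLA.R_mono[OF et_mono Z E] JZ JE])
    fix c h assume c: "c \<in> Ob A2" and h: "h \<in> Hom A2 (fo jA E) c" and zh: "zero_mor A2 (fo jA Z) c (cmp A2 h (fm jA et))"
    have Rc: "fo rA c \<in> Ob A" using adjA.Rob[OF c] .
    have RJE: "fo rA (fo jA E) \<in> Ob A" using adjA.Rob[OF JE] .
    have Rh: "fm rA h \<in> Hom A (fo rA (fo jA E)) (fo rA c)" using adjA.Rhom[OF h JE c] .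
    have RJet: "fm rA (fm jA et) \<in> Hom A (fo rA (fo jA Z)) (fo rA (fo jA E))" using adjA.Rhom[OF Jet JZ JE] .
    define hb where "hb = cmp A (fm rA h) (etaA E)"
    have hb: "hb \<in> Hom A E (fo rA c)" unfolding hb_def using A.comp_hom[OF adjA.eta_hom[OF E] Rh E RJE Rc] .
    have "cmp A hb et = cmp A (fm rA h) (cmp A (etaA E) et)"
      unfolding hb_def using A.assoc[OF et adjA.eta_hom[OF E] Rh Z E RJE Rc] by simp
    also have "\<dots> = cmp A (fm rA h) (cmp A (fm rA (fm jA et)) (etaA Z))" using adjA.eta_nat[OF et Z E] by simp
    also have "\<dots> = cmp A (cmp A (fm rA h) (fm rA (fm jA et))) (etaA Z)"
      using A.assoc[OF adjA.eta_hom[OF Z] RJet Rh Z RJZ RJE Rc] .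
    also have "\<dots> = cmp A (fm rA (cmp A2 h (fm jA et))) (etaA Z)" using adjA.Rcomp[OF Jet h JZ JE c] by simp
    finally have "zero_mor A Z (fo rA c) (cmp A hb et)"
      using A.zero_comp_right[OF RA_zero_mor[OF zh JZ c] adjA.eta_hom[OF Z] Z RJZ Rc] by simp
    then obtain u where u: "u \<in> Hom A C' (fo rA c)" and uc: "cmp A u c' = hb" using A.coker_fac[OF cc Rc hb] by blast
    have JRc: "fo jA (fo rA c) \<in> Ob A2" using adjA.Lob[OF Rc] .
    have Ju: "fm jA u \<in> Hom A2 (fo jA C') (fo jA (fo rA c))" using adjA.Lhom[OF u C' Rc] .
    have Jc': "fm jA c' \<in> Hom A2 (fo jA E) (fo jA C')" using adjA.Lhom[OF c' E C'] .
    have "h = cmp A2 (epsA c) (fm jA hb)" unfolding hb_def using adjA.transpose2[OF h E c] .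
    also have "\<dots> = cmp A2 (epsA c) (cmp A2 (fm jA u) (fm jA c'))" using uc adjA.Lcomp[OF c' u E C' Rc] by simp
    also have "\<dots> = cmp A2 (cmp A2 (epsA c) (fm jA u)) (fm jA c')"
      using A2.assoc[OF Jc' Ju adjA.eps_hom[OF c] JE JC' JRc c] .
    finally show "zero_mor A2 (fo jA E) c h"
      using A2.zero_morI[OF JC'z Jc' A2.comp_hom[OF Ju adjA.eps_hom[OF c] JC' JRc c] JE c] by simp
  qed
  define Jti where "Jti = inv_mor A2 (fo jA Z) (fo jA E) (fm jA et)"
  note Jti = iso_inv[OF Jet_iso, folded Jti_def]
  obtain r where r: "r \<in> Hom A E Z" and Jr: "fm jA r = Jti" using adjA.lift[OF Z etaZ E Jti(1)] by blast
  have ret: "cmp A r et \<in> Hom A Z Z" using A.comp_hom[OF et r Z E Z] .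
  have "fm jA (cmp A r et) = fm jA (ide A Z)" using adjA.Lcomp[OF et r Z E Z] Jr Jti(2) adjA.Lide[OF Z] by simp
  hence ret1: "cmp A r et = ide A Z" using adjA.determined[OF Z etaZ Z ret A.ide_hom[OF Z]] by blast
  have er: "cmp A et r \<in> Hom A E E" using A.comp_hom[OF r et E Z E] .
  have Jer: "fm jA (cmp A et r) = ide A2 (fo jA E)" using adjA.Lcomp[OF r et E Z E] Jr Jti(3) by simp
  have Fer: "fm F (cmp A et r) \<in> Hom B (fo F E) (fo F E)" using fm_hom[OF Fe.F er E E] .
  have JFer: "fm jB (fm F (cmp A et r)) = ide B2 (fo jB (fo F E))"
  proof -
    have th: "iso_mor B2 (fo jB (fo F E)) (fo F2 (fo jA E)) (theta E)" using theta_hom[OF E] .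
    have F2JE: "fo F2 (fo jA E) \<in> Ob B2" using fo_ob[OF F2 JE] .
    have "cmp B2 (theta E) (fm jB (fm F (cmp A et r))) = cmp B2 (fm F2 (fm jA (cmp A et r))) (theta E)"
      using theta_nat[OF er E E] .
    also have "\<dots> = theta E" using Jer fm_ide[OF F2 JE] iso_hom[OF th] JFE F2JE by simp
    also have "\<dots> = cmp B2 (theta E) (ide B2 (fo jB (fo F E)))" using iso_hom[OF th] JFE F2JE by simp
    finally show ?thesis using B2.iso_cancel_left[OF th adjB.Lhom[OF Fer FE FE] B2.ide_hom[OF JFE] _ JFE JFE F2JE] by blast
  qed
  have etaM: "iso_mor B M (fo rB (fo jB M)) (etaB M)" unfolding M_def using adjB.eta_R_iso[OF JFZ epsB_iso[OF JFZ]] .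
  have alh: "al \<in> Hom B (fo F E) M" using iso_hom[OF al] .
  have aF: "cmp B al (fm F (cmp A et r)) \<in> Hom B (fo F E) M" using B.comp_hom[OF Fer alh FE FE M] .
  have "fm jB (cmp B al (fm F (cmp A et r))) = fm jB al"
    using adjB.Lcomp[OF Fer alh FE FE M] JFer adjB.Lhom[OF alh FE M] JFE JM by simp
  hence "cmp B al (fm F (cmp A et r)) = al" using adjB.determined[OF M etaM FE aF alh] by blast
  also have "\<dots> = cmp B al (ide B (fo F E))" using alh FE M by simp
  finally have "fm F (cmp A et r) = ide B (fo F E)"
    using B.iso_cancel_left[OF al Fer B.ide_hom[OF FE] _ FE FE M] by blast
  hence "fm F (cmp A et r) = fm F (ide A E)" using fm_ide[OF Fe.F E] by simp
  hence er1: "cmp A et r = ide A E" using Fe.faithfulD[OF E E er A.ide_hom[OF E]] by blast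
  have et_iso: "iso_mor A Z E et" unfolding iso_mor_def using et r ret1 er1 by blast
  have Fet_iso: "iso_mor B FZ (fo F E) (fm F et)" unfolding FZ_def using fm_iso[OF Fe.F et_iso Z E] .
  have "cmp B al (fm F et) = cmp B (cmp B al ai) eta" using Fet B.assoc[OF eta ai(1) alh FZ M FE M] by simp
  also have "\<dots> = eta" using ai(3) eta FZ M by simp
  finally have "eta = cmp B al (fm F et)" by simp
  hence "iso_mor B FZ M eta" using B.iso_comp[OF Fet_iso al FZ FE M] by simp
  thus ?thesis unfolding eta_def M_def FZ_def Z_def .
qed

lemma F2_full: "full A2 B2 F2"
  unfolding full_def
proof (intro ballI)
  fix x y g assume x: "x \<in> Ob A2" and y: "y \<in> Ob A2" and g: "g \<in> Hom B2 (fo F2 x) (fo F2 y)"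
  define W where "W = fo rA x"
  define Z where "Z = fo rA y"
  have W: "W \<in> Ob A" and Z: "Z \<in> Ob A" unfolding W_def Z_def using adjA.Rob x y by auto
  have JW: "fo jA W \<in> Ob A2" and JZ: "fo jA Z \<in> Ob A2" using adjA.Lob W Z by auto
  have FW: "fo F W \<in> Ob B" and FZ: "fo F Z \<in> Ob B" using Fe.Fob W Z by auto
  have JFW: "fo jB (fo F W) \<in> Ob B2" and JFZ: "fo jB (fo F Z) \<in> Ob B2" using adjB.Lob FW FZ by auto
  have F2x: "fo F2 x \<in> Ob B2" and F2y: "fo F2 y \<in> Ob B2" using fo_ob[OF F2] x y by auto
  have F2JW: "fo F2 (fo jA W) \<in> Ob B2" and F2JZ: "fo F2 (fo jA Z) \<in> Ob B2" using fo_ob[OF F2] JW JZ by auto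
  have ex: "iso_mor A2 (fo jA W) x (epsA x)" unfolding W_def using epsA_iso[OF x] .
  have ey: "iso_mor A2 (fo jA Z) y (epsA y)" unfolding Z_def using epsA_iso[OF y] .
  have thW: "iso_mor B2 (fo jB (fo F W)) (fo F2 (fo jA W)) (theta W)" using theta_hom[OF W] .
  have thZ: "iso_mor B2 (fo jB (fo F Z)) (fo F2 (fo jA Z)) (theta Z)" using theta_hom[OF Z] .
  have F2ex: "iso_mor B2 (fo F2 (fo jA W)) (fo F2 x) (fm F2 (epsA x))" using fm_iso[OF F2 ex JW x] .
  have F2ey: "iso_mor B2 (fo F2 (fo jA Z)) (fo F2 y) (fm F2 (epsA y))" using fm_iso[OF F2 ey JZ y] .
  define sg where "sg = cmp B2 (fm F2 (epsA y)) (theta Z)"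
  define ta where "ta = cmp B2 (fm F2 (epsA x)) (theta W)"
  have sg: "iso_mor B2 (fo jB (fo F Z)) (fo F2 y) sg" unfolding sg_def using B2.iso_comp[OF thZ F2ey JFZ F2JZ F2y] .
  have ta: "iso_mor B2 (fo jB (fo F W)) (fo F2 x) ta" unfolding ta_def using B2.iso_comp[OF thW F2ex JFW F2JW F2x] .
  define sgi where "sgi = inv_mor B2 (fo jB (fo F Z)) (fo F2 y) sg"
  note sgi = iso_inv[OF sg, folded sgi_def]
  have gta: "cmp B2 g ta \<in> Hom B2 (fo jB (fo F W)) (fo F2 y)" using B2.comp_hom[OF iso_hom[OF ta] g JFW F2x F2y] .
  define phi where "phi = cmp B2 sgi (cmp B2 g ta)"
  have phi: "phi \<in> Hom B2 (fo jB (fo F W)) (fo jB (fo F Z))" unfolding phi_def using B2.comp_hom[OF gta sgi(1) JFW F2y JFZ] .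
  have sgphi: "cmp B2 sg phi = cmp B2 g ta"
    unfolding phi_def using B2.assoc[OF gta sgi(1) iso_hom[OF sg] JFW F2y JFZ F2y] sgi(3) gta JFW F2y by simp
  obtain psi where psi: "psi \<in> Hom B (fo F W) (fo F Z)" and Jpsi: "fm jB psi = phi"
    using adjB.lift[OF FZ crux[OF y, folded Z_def] FW phi] by blast
  obtain h where h: "h \<in> Hom A W Z" and Fh: "fm F h = psi" using Fe.fullD[OF W Z psi] by blast
  have Jh: "fm jA h \<in> Hom A2 (fo jA W) (fo jA Z)" using adjA.Lhom[OF h W Z] .
  define exi where "exi = inv_mor A2 (fo jA W) x (epsA x)"
  note exi = iso_inv[OF ex, folded exi_def]
  define f' where "f' = cmp A2 (epsA y) (fm jA h)"
  have f': "f' \<in> Hom A2 (fo jA W) y" unfolding f'_def using A2.comp_hom[OF Jh iso_hom[OF ey] JW JZ y] .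
  define f where "f = cmp A2 f' exi"
  have f: "f \<in> Hom A2 x y" unfolding f_def using A2.comp_hom[OF exi(1) f' x JW y] .
  have fe: "cmp A2 f (epsA x) = f'" unfolding f_def using A2.assoc[OF iso_hom[OF ex] exi(1) f' JW x JW y] exi(2) f' JW y by simp
  have F2f: "fm F2 f \<in> Hom B2 (fo F2 x) (fo F2 y)" using fm_hom[OF F2 f x y] .
  have F2f': "fm F2 f' \<in> Hom B2 (fo F2 (fo jA W)) (fo F2 y)" using fm_hom[OF F2 f' JW y] .
  have F2Jh: "fm F2 (fm jA h) \<in> Hom B2 (fo F2 (fo jA W)) (fo F2 (fo jA Z))" using fm_hom[OF F2 Jh JW JZ] .
  have "cmp B2 (fm F2 f') (theta W) = cmp B2 (cmp B2 (fm F2 (epsA y)) (fm F2 (fm jA h))) (theta W)"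
    unfolding f'_def using fm_comp[OF F2 Jh iso_hom[OF ey] JW JZ y] by simp
  also have "\<dots> = cmp B2 (fm F2 (epsA y)) (cmp B2 (fm F2 (fm jA h)) (theta W))"
    using B2.assoc[OF iso_hom[OF thW] F2Jh fm_hom[OF F2 iso_hom[OF ey] JZ y] JFW F2JW F2JZ F2y] by simp
  also have "\<dots> = cmp B2 (fm F2 (epsA y)) (cmp B2 (theta Z) phi)"
    using theta_nat[OF h W Z] Fh Jpsi by simp
  also have "\<dots> = cmp B2 sg phi"
    unfolding sg_def using B2.assoc[OF phi iso_hom[OF thZ] fm_hom[OF F2 iso_hom[OF ey] JZ y] JFW JFZ F2JZ F2y] .
  also have "\<dots> = cmp B2 (cmp B2 g (fm F2 (epsA x))) (theta W)"
    unfolding sgphi ta_def using B2.assoc[OF iso_hom[OF thW] fm_hom[OF F2 iso_hom[OF ex] JW x] g JFW F2JW F2x F2y] .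
  finally have 1: "cmp B2 (fm F2 f') (theta W) = cmp B2 (cmp B2 g (fm F2 (epsA x))) (theta W)" .
  have gex: "cmp B2 g (fm F2 (epsA x)) \<in> Hom B2 (fo F2 (fo jA W)) (fo F2 y)"
    using B2.comp_hom[OF fm_hom[OF F2 iso_hom[OF ex] JW x] g F2JW F2x F2y] .
  have 2: "fm F2 f' = cmp B2 g (fm F2 (epsA x))" using B2.iso_cancel_right[OF thW F2f' gex 1 F2y JFW F2JW] .
  have "cmp B2 (fm F2 f) (fm F2 (epsA x)) = fm F2 f'" using fm_comp[OF F2 iso_hom[OF ex] f JW x y] fe by simp
  hence "cmp B2 (fm F2 f) (fm F2 (epsA x)) = cmp B2 g (fm F2 (epsA x))" using 2 by simp
  hence "fm F2 f = g" using B2.iso_cancel_right[OF F2ex F2f g _ F2y F2JW F2x] by blast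
  thus "\<exists>f\<in>Hom A2 x y. fm F2 f = g" using f by blast
qed

lemma F2_es: "ess_surj A2 B2 F2"
  unfolding ess_surj_def
proof
  fix d assume d: "d \<in> Ob B2"
  have M: "fo rB d \<in> Ob B" using adjB.Rob[OF d] .
  obtain X al where X: "X \<in> Ob A" and al: "iso_mor B (fo F X) (fo rB d) al" using Fe.esD[OF M] by blast
  have FX: "fo F X \<in> Ob B" using Fe.Fob[OF X] .
  have JX: "fo jA X \<in> Ob A2" using adjA.Lob[OF X] .
  have o: "fo F2 (fo jA X) \<in> Ob B2" "fo jB (fo F X) \<in> Ob B2" "fo jB (fo rB d) \<in> Ob B2"
    using fo_ob[OF F2 JX] adjB.Lob[OF FX] adjB.Lob[OF M] by auto
  have 1: "iso_obj B2 (fo F2 (fo jA X)) (fo jB (fo F X))"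
    using iso_inv_iso[OF theta_hom[OF X]] unfolding iso_obj_def by blast
  have 2: "iso_obj B2 (fo jB (fo F X)) (fo jB (fo rB d))"
    using fm_iso[OF adjB.L al FX M] unfolding iso_obj_def by blast
  have 3: "iso_obj B2 (fo jB (fo rB d)) d" using epsB_iso[OF d] unfolding iso_obj_def by blast
  have "iso_obj B2 (fo F2 (fo jA X)) d"
    using B2.iso_obj_trans[OF B2.iso_obj_trans[OF 1 2 o] 3 o(1) o(3) d] .
  thus "\<exists>c\<in>Ob A2. iso_obj B2 (fo F2 c) d" using JX by blast
qed

end


theorem lemma4p4:
  fixes A1 :: "('a1, 'b1) cat" and A :: "('a, 'b) cat" and A2 :: "('a2, 'b2) cat"
    and B1 :: "('c1, 'd1) cat" and B :: "('c, 'd) cat" and B2 :: "('c2, 'd2) cat"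
    and ilowA :: "('a1, 'b1, 'a, 'b) ftr" and iupA ishA :: "('a, 'b, 'a1, 'b1) ftr"
    and jupA :: "('a, 'b, 'a2, 'b2) ftr" and jshA jlowA :: "('a2, 'b2, 'a, 'b) ftr"
    and ilowB :: "('c1, 'd1, 'c, 'd) ftr" and iupB ishB :: "('c, 'd, 'c1, 'd1) ftr"
    and jupB :: "('c, 'd, 'c2, 'd2) ftr" and jshB jlowB :: "('c2, 'd2, 'c, 'd) ftr"
    and F :: "('a, 'b, 'c, 'd) ftr" and F1 :: "('a1, 'b1, 'c1, 'd1) ftr"
    and F2 :: "('a2, 'b2, 'c2, 'd2) ftr"
  assumes "recollement A1 A A2 ilowA iupA ishA jupA jshA jlowA"
    and "recollement B1 B B2 ilowB iupB ishB jupB jshB jlowB"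
    and "is_functor A B F" and "is_functor A1 B1 F1" and "is_functor A2 B2 F2"
    and "equivalence A B F" and "equivalence A1 B1 F1"
    and "nat_isomorphic A B2 (fcomp jupB F) (fcomp F2 jupA)"
    and "nat_isomorphic A1 B (fcomp ilowB F1) (fcomp F ilowA)"
  shows "full A2 B2 F2 \<and> ess_surj A2 B2 F2"
proof -
  note R1 = assms(1)[unfolded recollement_def]
  note R2 = assms(2)[unfolded recollement_def]
  have abA1: "abelian A1" and abA: "abelian A" and abA2: "abelian A2" using R1 by blast+
  have abB1: "abelian B1" and abB: "abelian B" and abB2: "abelian B2" using R2 by blast+
  have iA: "is_functor A1 A ilowA" using R1 by blast
  have iB: "is_functor B1 B ilowB" using R2 by blast
  obtain eta1A eps1A where adjLA: "adjunction A2 A jshA jupA eta1A eps1A" using R1 by blast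
  obtain etaA epsA where adjA: "adjunction A A2 jupA jlowA etaA epsA"
    and epsA: "\<forall>a\<in>Ob A2. iso_mor A2 (fo jupA (fo jlowA a)) a (epsA a)" using R1 by blast
  have kerA: "\<forall>x\<in>Ob A. zero_object A2 (fo jupA x) \<longleftrightarrow> (\<exists>y\<in>Ob A1. iso_obj A (fo ilowA y) x)" using R1 by blast
  obtain eta1B eps1B where adjLB: "adjunction B2 B jshB jupB eta1B eps1B" using R2 by blast
  obtain etaB epsB where adjB: "adjunction B B2 jupB jlowB etaB epsB"
    and epsB: "\<forall>a\<in>Ob B2. iso_mor B2 (fo jupB (fo jlowB a)) a (epsB a)" using R2 by blast
  have kerB: "\<forall>x\<in>Ob B. zero_object B2 (fo jupB x) \<longleftrightarrow> (\<exists>y\<in>Ob B1. iso_obj B (fo ilowB y) x)" using R2 by blast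
  obtain theta where theta: "nat_iso A B2 (fcomp jupB F) (fcomp F2 jupA) theta" using assms(8) unfolding nat_isomorphic_def by blast
  obtain kappa where kappa: "nat_iso A1 B (fcomp ilowB F1) (fcomp F ilowA) kappa" using assms(9) unfolding nat_isomorphic_def by blast
  have cA: "category A" and cA2: "category A2" and cB: "category B" and cB2: "category B2" and cA1: "category A1" and cB1: "category B1"
    using abelian_cat abA abA2 abB abB2 abA1 abB1 by blast+
  note Fp = equivalence_props[OF cA cB assms(6)]
  note F1p = equivalence_props[OF cA1 cB1 assms(7)]
  have epsA': "\<And>a. a \<in> Ob A2 \<Longrightarrow> iso_mor A2 (fo jupA (fo jlowA a)) a (epsA a)" using epsA by blast
  have epsB': "\<And>a. a \<in> Ob B2 \<Longrightarrow> iso_mor B2 (fo jupB (fo jlowB a)) a (epsB a)" using epsB by blast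
  have kerA': "\<And>x. x \<in> Ob A \<Longrightarrow> zero_object A2 (fo jupA x) \<longleftrightarrow> (\<exists>y\<in>Ob A1. iso_obj A (fo ilowA y) x)" using kerA by blast
  have kerB': "\<And>x. x \<in> Ob B \<Longrightarrow> zero_object B2 (fo jupB x) \<longleftrightarrow> (\<exists>y\<in>Ob B1. iso_obj B (fo ilowB y) x)" using kerB by blast
  interpret S: setting A A2 B B2 jupA jlowA etaA epsA jshA eta1A eps1A jupB jlowB etaB epsB jshB eta1B eps1B F
      A1 B1 ilowA ilowB F1 F2 theta kappa
    by unfold_locales
      (simp_all add: cA cA2 cB cB2 abA abA2 abB abB2 adjA adjLA adjB adjLB assms(3) assms(5) Fp F1p(3) assms(4)
        epsA' epsB' kerA' kerB' iA iB theta kappa)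
  show ?thesis using S.F2_full S.F2_es by blast
qed

end
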